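(* Let $\chi\in\mathcal{S}(\mathbb{R}^n)$ with $\|\chi\|_{L^2}=1$. For all $\alpha,\beta\in\mathbb{R}^{2n}$ and all multi-indices $a,b\in(\mathbb{N}\cup\{0\})^{2n}$, $$|W_{|\chi_\alpha\rangle\langle\chi_\beta|}|_{a,b}\le\sum_{c\le b}\sum_{d\le a}\sum_{e\le c}\sum_{f\le d}\binom{b}{c}\binom{a}{d}\binom{c}{e}\binom{d}{f}2^{-|d|}\,|W_\chi|_{a-d,b-c}\,\big|\alpha^{\hat e+f}\beta^{\hat c-\hat e+d-f}\big|$$ and $$|W_{|\chi_\alpha\rangle\langle\chi_\beta|}|_{a,b}\le 4^{|a|+|b|}(1+|\alpha|+|\beta|)^{|a|+|b|}\,\|W_\chi\|_{a,b}.$$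
   Context: For an operator $E$ on $L^2(\mathbb{R}^n)$ with integral kernel $K_E\in L^2(\mathbb{R}^{2n})$, its Wigner transform is $W_E(x,p)=(2\pi)^{-n}\int e^{ip\cdot y}K_E(x-y/2,x+y/2)\,dy$; $W_\chi$ denotes the Wigner transform of $|\chi\rangle\langle\chi|$ (kernel $\chi(x)\overline{\chi(y)}$). For $\xi=(\xi_x,\xi_p)\in\mathbb{R}^{2n}$, $(D_\xi\phi)(y)=e^{i(y-\xi_x/2)\cdot\xi_p}\phi(y-\xi_x)$; $\chi_\alpha:=D_\alpha\chi$, and $|\chi_\alpha\rangle\langle\chi_\beta|$ is the rank-one operator with kernel $\chi_\alpha(x)\overline{\chi_\beta(y)}$. For $F:\mathbb{R}^{2n}\to\mathbb{C}$, $|F|_{a,b}:=\sup_\gamma|\gamma^a\partial_\gamma^bF(\gamma)|$ and $\|F\|_{a,b}:=\sum_{a'\le a}\sum_{b'\le b}|F|_{a',b'}$. Multi-index conventions: $\alpha^a=\prod_i\alpha_i^{a_i}$, $|a|=\sum_ia_i$, $a!=\prod_ia_i!$, $\binom{a}{b}=a!/((a-b)!b!)$, $b\le c$ means $b_i\le c_i$ for all $i$; for $a=(a_x,a_p)$ with $a_x,a_p\in(\mathbb{N}\cup\{0\})^n$, $\hat a:=(a_p,a_x)$. $|\alpha|$ is the Euclidean norm. *)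

theory Defs
  imports "HOL-Analysis.Analysis"
begin

definition dderiv :: "'a::real_normed_vector \<Rightarrow> ('a \<Rightarrow> complex) \<Rightarrow> 'a \<Rightarrow> complex" where
  "dderiv v F g = vector_derivative (\<lambda>t::real. F (g + t *\<^sub>R v)) (at 0)"

definition iter_dderiv :: "'a::real_normed_vector list \<Rightarrow> ('a \<Rightarrow> complex) \<Rightarrow> 'a \<Rightarrow> complex" where
  "iter_dderiv vs F = foldr dderiv vs F"

definition idx_list :: "'n::finite list" where
  "idx_list = (SOME xs. distinct xs \<and> set xs = UNIV)"

definition schwartz :: "(real^'n \<Rightarrow> complex) \<Rightarrow> bool" where
  "schwartz f \<longleftrightarrow>
     (\<forall>vs x. iter_dderiv vs f differentiable (at x)) \<and>
     (\<forall>vs (a::'n \<Rightarrow> nat). bounded (range (\<lambda>x. (\<Prod>i\<in>UNIV. x $ i ^ a i) *\<^sub>R iter_dderiv vs f x)))"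

type_synonym 'n phase = "(real^'n) \<times> (real^'n)"
type_synonym 'n midx = "('n \<Rightarrow> nat) \<times> ('n \<Rightarrow> nat)"

definition mi_le :: "'n midx \<Rightarrow> 'n midx \<Rightarrow> bool" where
  "mi_le b c \<longleftrightarrow> (\<forall>i. fst b i \<le> fst c i) \<and> (\<forall>i. snd b i \<le> snd c i)"

definition mi_add :: "'n midx \<Rightarrow> 'n midx \<Rightarrow> 'n midx" where
  "mi_add a b = ((\<lambda>i. fst a i + fst b i), (\<lambda>i. snd a i + snd b i))"

definition mi_sub :: "'n midx \<Rightarrow> 'n midx \<Rightarrow> 'n midx" where
  "mi_sub a b = ((\<lambda>i. fst a i - fst b i), (\<lambda>i. snd a i - snd b i))"

definition mi_hat :: "'n midx \<Rightarrow> 'n midx" where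
  "mi_hat a = (snd a, fst a)"

definition mi_abs :: "'n::finite midx \<Rightarrow> nat" where
  "mi_abs a = (\<Sum>i\<in>UNIV. fst a i) + (\<Sum>i\<in>UNIV. snd a i)"

definition mi_binom :: "'n::finite midx \<Rightarrow> 'n midx \<Rightarrow> nat" where
  "mi_binom a b = (\<Prod>i\<in>UNIV. fst a i choose fst b i) * (\<Prod>i\<in>UNIV. snd a i choose snd b i)"

definition mi_pow :: "'n::finite phase \<Rightarrow> 'n midx \<Rightarrow> real" where
  "mi_pow g a = (\<Prod>i\<in>UNIV. fst g $ i ^ fst a i) * (\<Prod>i\<in>UNIV. snd g $ i ^ snd a i)"

definition phase_dirs :: "'n::finite midx \<Rightarrow> 'n phase list" where
  "phase_dirs b =
     concat (map (\<lambda>i. replicate (fst b i) (axis i 1, 0)) idx_list) @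
     concat (map (\<lambda>i. replicate (snd b i) (0, axis i 1)) idx_list)"

definition pderiv_mi :: "'n::finite midx \<Rightarrow> ('n phase \<Rightarrow> complex) \<Rightarrow> 'n phase \<Rightarrow> complex" where
  "pderiv_mi b F = iter_dderiv (phase_dirs b) F"

definition seminorm :: "('n::finite phase \<Rightarrow> complex) \<Rightarrow> 'n midx \<Rightarrow> 'n midx \<Rightarrow> ennreal" where
  "seminorm F a b = (SUP g. ennreal (cmod (of_real (mi_pow g a) * pderiv_mi b F g)))"

definition seminorm_sum :: "('n::finite phase \<Rightarrow> complex) \<Rightarrow> 'n midx \<Rightarrow> 'n midx \<Rightarrow> ennreal" where
  "seminorm_sum F a b = (\<Sum>a'\<in>{a'. mi_le a' a}. \<Sum>b'\<in>{b'. mi_le b' b}. seminorm F a' b')"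

definition wigner :: "(real^'n \<Rightarrow> real^'n \<Rightarrow> complex) \<Rightarrow> 'n::finite phase \<Rightarrow> complex" where
  "wigner K g = complex_of_real (1 / (2 * pi) ^ CARD('n)) *
     (LINT y|lborel. exp (\<i> * complex_of_real (snd g \<bullet> y)) *
        K (fst g - (1/2) *\<^sub>R y) (fst g + (1/2) *\<^sub>R y))"

text \<open>Kernel of the rank-one operator |phi><psi|.\<close>
definition rank_one :: "(real^'n \<Rightarrow> complex) \<Rightarrow> (real^'n \<Rightarrow> complex) \<Rightarrow> real^'n \<Rightarrow> real^'n \<Rightarrow> complex" where
  "rank_one phi psi x y = phi x * cnj (psi y)"

definition Dtrans :: "'n::finite phase \<Rightarrow> (real^'n \<Rightarrow> complex) \<Rightarrow> real^'n \<Rightarrow> complex" where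
  "Dtrans xi phi y = exp (\<i> * complex_of_real ((y - (1/2) *\<^sub>R fst xi) \<bullet> snd xi)) * phi (y - fst xi)"

end

theory Submission
  imports Defs "HOL-Probability.Sinc_Integral"
begin

lemma DUI:
  fixes f :: "real \<Rightarrow> 'a \<Rightarrow> complex" and M :: "'a measure"
  assumes der: "\<And>s y. ((\<lambda>s. f s y) has_vector_derivative f' s y) (at s)"
    and meas: "\<And>s. f s \<in> borel_measurable M"
    and meas': "\<And>s. f' s \<in> borel_measurable M"
    and int0: "integrable M (f 0)"
    and intB: "integrable M B"
    and bnd: "\<And>s y. norm (f' s y) \<le> B y"
  shows "((\<lambda>s. \<integral>y. f s y \<partial>M) has_vector_derivative (\<integral>y. f' 0 y \<partial>M)) (at 0)"
proof -
  have lin: "norm (f h y - f 0 y - h *\<^sub>R f' 0 y) \<le> norm h * (2 * B y)" for h y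
  proof -
    have "norm (f h y - f 0 y - (h - 0) *\<^sub>R f' 0 y) \<le> norm (h - 0) * (2 * B y)"
    proof (rule vector_differentiable_bound_linearization[where S=UNIV and f="\<lambda>s. f s y" and f'="\<lambda>s. f' s y"])
      show "((\<lambda>s. f s y) has_vector_derivative f' x y) (at x within UNIV)" for x using der by simp
      show "norm (f' x y - f' 0 y) \<le> 2 * B y" for x
        using norm_triangle_ineq4[of "f' x y" "f' 0 y"] bnd[of x y] bnd[of 0 y] by linarith
    qed auto
    then show ?thesis by simp
  qed
  have intf': "integrable M (f' 0)"
    by (rule Bochner_Integration.integrable_bound[OF intB meas']) (use bnd in \<open>auto intro!: AE_I2 order_trans[OF _ abs_ge_self]\<close>)
  have intf: "integrable M (f h)" for h
  proof -
    have "integrable M (\<lambda>y. (f 0 y + h *\<^sub>R f' 0 y) + (f h y - f 0 y - h *\<^sub>R f' 0 y))"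
    proof (rule Bochner_Integration.integrable_add)
      show "integrable M (\<lambda>y. f 0 y + h *\<^sub>R f' 0 y)" using int0 intf' by auto
      show "integrable M (\<lambda>y. f h y - f 0 y - h *\<^sub>R f' 0 y)"
        apply (rule Bochner_Integration.integrable_bound[where f="\<lambda>y. norm h * (2 * B y)"])
        using intB lin meas meas' by (auto intro!: AE_I2 order_trans[OF _ abs_ge_self])
    qed
    then show ?thesis by simp
  qed
  define G where "G h = (\<integral>y. norm (f h y - f 0 y - h *\<^sub>R f' 0 y) / norm h \<partial>M)" for h
  have G0: "(G \<longlongrightarrow> 0) (at 0)"
    unfolding tendsto_at_iff_sequentially
  proof (intro allI impI)
    fix X :: "nat \<Rightarrow> real" assume X: "\<forall>i. X i \<in> UNIV - {0}" and X0: "X \<longlonglongrightarrow> 0"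
    have "(\<lambda>i. \<integral>y. norm (f (X i) y - f 0 y - X i *\<^sub>R f' 0 y) / norm (X i) \<partial>M) \<longlonglongrightarrow> (\<integral>y. (0::real) \<partial>M)"
    proof (rule integral_dominated_convergence[where w="\<lambda>y. 2 * B y"])
      show "(\<lambda>y. 0::real) \<in> borel_measurable M" by simp
      show "(\<lambda>y. norm (f (X i) y - f 0 y - X i *\<^sub>R f' 0 y) / norm (X i)) \<in> borel_measurable M" for i
        using meas meas' by measurable
      show "integrable M (\<lambda>y. 2 * B y)" using intB by simp
      show "AE y in M. (\<lambda>i. norm (f (X i) y - f 0 y - X i *\<^sub>R f' 0 y) / norm (X i)) \<longlonglongrightarrow> 0"
      proof (rule AE_I2)
        fix y
        have "((\<lambda>h. norm (f (0 + h) y - f 0 y - h *\<^sub>R f' 0 y) / norm h) \<longlongrightarrow> 0) (at 0)"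
          using der[where s=0 and y=y] unfolding has_vector_derivative_def has_derivative_at by auto
        then show "(\<lambda>i. norm (f (X i) y - f 0 y - X i *\<^sub>R f' 0 y) / norm (X i)) \<longlonglongrightarrow> 0"
          unfolding tendsto_at_iff_sequentially comp_def using X X0 by auto
      qed
      show "AE y in M. norm (norm (f (X i) y - f 0 y - X i *\<^sub>R f' 0 y) / norm (X i)) \<le> 2 * B y" for i
      proof (rule AE_I2)
        fix y
        have "X i \<noteq> 0" using X by auto
        then show "norm (norm (f (X i) y - f 0 y - X i *\<^sub>R f' 0 y) / norm (X i)) \<le> 2 * B y"
          using lin[of "X i" y] by (simp add: divide_simps mult.commute)
      qed
    qed
    then show "(G \<circ> X) \<longlonglongrightarrow> 0" by (simp add: G_def comp_def)
  qed
  have "((\<lambda>h. norm ((\<integral>y. f (0 + h) y \<partial>M) - (\<integral>y. f 0 y \<partial>M) - h *\<^sub>R (\<integral>y. f' 0 y \<partial>M)) / norm h) \<longlongrightarrow> 0) (at 0)"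
  proof (rule tendsto_sandwich[OF _ _ tendsto_const G0])
    show "\<forall>\<^sub>F h in at 0. 0 \<le> norm ((\<integral>y. f (0 + h) y \<partial>M) - (\<integral>y. f 0 y \<partial>M) - h *\<^sub>R (\<integral>y. f' 0 y \<partial>M)) / norm h"
      by simp
    show "\<forall>\<^sub>F h in at 0. norm ((\<integral>y. f (0 + h) y \<partial>M) - (\<integral>y. f 0 y \<partial>M) - h *\<^sub>R (\<integral>y. f' 0 y \<partial>M)) / norm h \<le> G h"
    proof (rule always_eventually, rule allI)
      fix h :: real
      have eq: "(\<integral>y. f (0 + h) y \<partial>M) - (\<integral>y. f 0 y \<partial>M) - h *\<^sub>R (\<integral>y. f' 0 y \<partial>M)
          = (\<integral>y. f h y - f 0 y - h *\<^sub>R f' 0 y \<partial>M)"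
        using intf intf' by simp
      have "norm (\<integral>y. f h y - f 0 y - h *\<^sub>R f' 0 y \<partial>M) \<le> (\<integral>y. norm (f h y - f 0 y - h *\<^sub>R f' 0 y) \<partial>M)"
        by (rule integral_norm_bound)
      also have "\<dots> = norm h * G h"
      proof (cases "h = 0")
        case True then show ?thesis by simp
      next
        case False then show ?thesis unfolding G_def by (simp add: divide_simps)
      qed
      finally show "norm ((\<integral>y. f (0 + h) y \<partial>M) - (\<integral>y. f 0 y \<partial>M) - h *\<^sub>R (\<integral>y. f' 0 y \<partial>M)) / norm h \<le> G h"
        unfolding eq by (cases "h = 0") (auto simp: G_def divide_simps mult.commute)
    qed
  qed
  then show ?thesis unfolding has_vector_derivative_def has_derivative_at
    by (auto intro: bounded_linear_scaleR_left)
qed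

lemma line_hasderiv:
  assumes "(F has_derivative F') (at (z0 + s *\<^sub>R w))"
  shows "((\<lambda>t. F (z0 + t *\<^sub>R w)) has_vector_derivative F' w) (at s)"
proof -
  have l: "linear F'" using assms has_derivative_linear by blast
  have "((\<lambda>t. z0 + t *\<^sub>R w) has_derivative (\<lambda>h. h *\<^sub>R w)) (at s)"
    by (auto intro!: derivative_eq_intros)
  from diff_chain_at[OF this assms] have "((\<lambda>t. F (z0 + t *\<^sub>R w)) has_derivative (\<lambda>h. F' (h *\<^sub>R w))) (at s)"
    by (simp add: comp_def)
  moreover have "(\<lambda>h. F' (h *\<^sub>R w)) = (\<lambda>h. h *\<^sub>R F' w)" using l by (simp add: linear_scale)
  ultimately show ?thesis unfolding has_vector_derivative_def by simp
qed

lemma line_deriv: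
  assumes "\<And>z. F differentiable (at z)"
  shows "((\<lambda>t. F (z0 + t *\<^sub>R w)) has_vector_derivative dderiv w F (z0 + s *\<^sub>R w)) (at s)"
proof -
  obtain D where D: "(F has_derivative D) (at (z0 + s *\<^sub>R w))" using assms differentiable_def by blast
  have 1: "((\<lambda>t. F (z0 + t *\<^sub>R w)) has_vector_derivative D w) (at s)" by (rule line_hasderiv[OF D])
  have "((\<lambda>t. F ((z0 + s *\<^sub>R w) + t *\<^sub>R w)) has_vector_derivative D w) (at 0)"
    by (rule line_hasderiv) (use D in simp)
  then have "dderiv w F (z0 + s *\<^sub>R w) = D w" unfolding dderiv_def by (rule vector_derivative_at)
  with 1 show ?thesis by simp
qed

lemma iter_dderiv_Cons: "iter_dderiv (v # vs) F = dderiv v (iter_dderiv vs F)"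
  by (simp add: iter_dderiv_def)
lemma iter_dderiv_Nil: "iter_dderiv [] F = F"
  by (simp add: iter_dderiv_def)
lemma iter_dderiv_append: "iter_dderiv (xs @ ys) F = iter_dderiv xs (iter_dderiv ys F)"
  by (simp add: iter_dderiv_def)

context
  fixes chi :: "real^'n::finite \<Rightarrow> complex"
  assumes sch: "schwartz chi"
begin

lemma chi_diff: "iter_dderiv us chi differentiable (at z)"
  using sch unfolding schwartz_def by blast

lemma chi_cont: "continuous_on UNIV (iter_dderiv us chi)"
  by (meson chi_diff continuous_at_imp_continuous_on differentiable_imp_continuous_within)

lemma chi_meas[measurable]: "iter_dderiv us chi \<in> borel_measurable borel"
  by (rule borel_measurable_continuous_onI[OF chi_cont])

lemma chi_line: "((\<lambda>t. iter_dderiv us chi (z0 + t *\<^sub>R w)) has_vector_derivative iter_dderiv (w # us) chi (z0 + s *\<^sub>R w)) (at s)"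
  unfolding iter_dderiv_Cons by (rule line_deriv[OF chi_diff])

lemma chi_bdd: "\<exists>C. \<forall>x. norm ((\<Prod>i\<in>UNIV. x $ i ^ a i) *\<^sub>R iter_dderiv us chi x) \<le> C"
  using sch unfolding schwartz_def bounded_iff by blast

end

context
  fixes chi :: "real^'n::finite \<Rightarrow> complex"
  assumes sch: "schwartz chi"
begin

lemma chi_decay: "\<exists>C. \<forall>z. (\<Prod>i\<in>UNIV. (1 + (z$i)^2)^N) * norm (iter_dderiv us chi z) \<le> C"
proof -
  have "\<forall>a. \<exists>C. \<forall>x. norm ((\<Prod>i\<in>UNIV. x $ i ^ a i) *\<^sub>R iter_dderiv us chi x) \<le> C"
    using chi_bdd[OF sch] by blast
  then obtain M where M: "\<And>a x. norm ((\<Prod>i\<in>UNIV. x $ i ^ a i) *\<^sub>R iter_dderiv us chi x) \<le> M a"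
    by metis
  define A where "A = PiE (UNIV::'n set) (\<lambda>_. {..N})"
  have finA: "finite A" unfolding A_def by (simp add: finite_PiE)
  show ?thesis
  proof (intro exI allI)
    fix z :: "real^'n"
    have "(\<Prod>i\<in>UNIV. (1 + (z$i)^2)^N) = (\<Prod>i\<in>UNIV. \<Sum>j\<le>N. real (N choose j) * ((z$i)^2)^j)"
      by (intro prod.cong refl) (subst add.commute, subst binomial_ring, simp add: ac_simps)
    also have "\<dots> = (\<Sum>f\<in>A. \<Prod>i\<in>UNIV. real (N choose f i) * ((z$i)^2)^(f i))"
      unfolding A_def by (rule prod_sum_PiE) auto
    finally have eq: "(\<Prod>i\<in>UNIV. (1 + (z$i)^2)^N) = (\<Sum>f\<in>A. \<Prod>i\<in>UNIV. real (N choose f i) * ((z$i)^2)^(f i))" .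
    have "(\<Prod>i\<in>UNIV. (1 + (z$i)^2)^N) * norm (iter_dderiv us chi z)
        = (\<Sum>f\<in>A. (\<Prod>i\<in>UNIV. real (N choose f i)) * norm ((\<Prod>i\<in>UNIV. z $ i ^ (2 * f i)) *\<^sub>R iter_dderiv us chi z))"
      unfolding eq sum_distrib_right
    proof (intro sum.cong refl)
      fix f
      have "(\<Prod>i\<in>UNIV. real (N choose f i) * ((z$i)^2)^(f i)) = (\<Prod>i\<in>UNIV. real (N choose f i)) * (\<Prod>i\<in>UNIV. z $ i ^ (2 * f i))"
        by (simp add: prod.distrib power_mult)
      moreover have "(\<Prod>i\<in>UNIV. z $ i ^ (2 * f i)) \<ge> 0"
        by (intro prod_nonneg) (simp add: power_mult)
      ultimately show "(\<Prod>i\<in>UNIV. real (N choose f i) * ((z$i)^2)^(f i)) * norm (iter_dderiv us chi z) =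
         (\<Prod>i\<in>UNIV. real (N choose f i)) * norm ((\<Prod>i\<in>UNIV. z $ i ^ (2 * f i)) *\<^sub>R iter_dderiv us chi z)"
        by simp
    qed
    also have "\<dots> \<le> (\<Sum>f\<in>A. (\<Prod>i\<in>UNIV. real (N choose f i)) * M (\<lambda>i. 2 * f i))"
      by (intro sum_mono mult_left_mono M prod_nonneg) auto
    finally show "(\<Prod>i\<in>UNIV. (1 + (z$i)^2)^N) * norm (iter_dderiv us chi z) \<le> (\<Sum>f\<in>A. (\<Prod>i\<in>UNIV. real (N choose f i)) * M (\<lambda>i. 2 * f i))" .
  qed
qed

end

definition ypow :: "('n::finite \<Rightarrow> nat) \<Rightarrow> real^'n \<Rightarrow> real" where
  "ypow k y = (\<Prod>i\<in>UNIV. (y$i)^(k i))"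

definition rho :: "real^'n::finite \<Rightarrow> real" where
  "rho y = (\<Prod>i\<in>UNIV. inverse (1 + (y$i)^2))"

definition hk :: "(real^'n::finite \<Rightarrow> complex) \<Rightarrow> ('n \<Rightarrow> nat) \<Rightarrow> (real^'n) list \<Rightarrow> (real^'n) list \<Rightarrow> real^'n \<Rightarrow> real^'n \<Rightarrow> complex" where
  "hk chi k us ws x y = complex_of_real (ypow k y) * iter_dderiv us chi (x - (1/2) *\<^sub>R y) * cnj (iter_dderiv ws chi (x + (1/2) *\<^sub>R y))"

lemma scalar_ineq:
  fixes u a b :: real
  assumes "u = b - a" "k + 1 \<le> N"
  shows "\<bar>u\<bar>^k * (1 + u^2) \<le> 2^N * ((1 + a^2)^N * (1 + b^2)^N)"
proof -
  have u1: "\<bar>u\<bar> \<le> 1 + u^2"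
  proof -
    have "0 \<le> (\<bar>u\<bar> - 1)^2" by simp
    also have "(\<bar>u\<bar> - 1)^2 = u^2 - 2 * \<bar>u\<bar> + 1" by (simp add: power2_eq_square algebra_simps)
    finally show ?thesis by simp
  qed
  have "\<bar>u\<bar>^k * (1 + u^2) \<le> (1 + u^2)^k * (1 + u^2)"
    by (intro mult_right_mono power_mono u1) auto
  also have "\<dots> = (1+u^2)^(k+1)" by simp
  also have "\<dots> \<le> (1+u^2)^N" by (rule power_increasing[OF assms(2)]) auto
  also have "\<dots> \<le> (2 * ((1 + a^2) * (1 + b^2)))^N"
  proof (rule power_mono)
    have "u^2 \<le> 2*a^2 + 2*b^2" unfolding assms(1) proof -
      have "0 \<le> (a + b)^2" by simp
      then show "(b - a)^2 \<le> 2*a^2 + 2*b^2" by (simp add: power2_eq_square algebra_simps)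
    qed
    moreover have "0 \<le> a^2 * b^2" by simp
    moreover have "2 * ((1 + a^2) * (1 + b^2)) = 1 + (1 + 2*a^2 + 2*b^2 + 2*(a^2*b^2))" by (simp add: algebra_simps)
    ultimately show "1 + u^2 \<le> 2 * ((1 + a^2) * (1 + b^2))" by linarith
  qed auto
  also have "\<dots> = 2^N * ((1 + a^2)^N * (1 + b^2)^N)" by (simp add: power_mult_distrib)
  finally show ?thesis .
qed

lemma rho_pos: "rho y > 0"
  unfolding rho_def by (intro prod_pos) (simp add: add_pos_nonneg)

context
  fixes chi :: "real^'n::finite \<Rightarrow> complex"
  assumes sch: "schwartz chi"
begin

lemma hk_dom: "\<exists>C. \<forall>x y. norm (hk chi k us ws x y) \<le> C * rho y"
proof -
  define N where "N = (\<Sum>i\<in>UNIV. k i) + 1"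
  have kN: "k i + 1 \<le> N" for i
    unfolding N_def using member_le_sum[of i UNIV k] by auto
  obtain C1 where C1: "\<And>z. (\<Prod>i\<in>UNIV. (1 + (z$i)^2)^N) * norm (iter_dderiv us chi z) \<le> C1"
    using chi_decay[OF sch, of N us] by blast
  obtain C2 where C2: "\<And>z. (\<Prod>i\<in>UNIV. (1 + (z$i)^2)^N) * norm (iter_dderiv ws chi z) \<le> C2"
    using chi_decay[OF sch, of N ws] by blast
  have c1: "0 \<le> C1" by (rule order_trans[OF _ C1[of 0]]) (auto intro!: mult_nonneg_nonneg prod_nonneg)
  show ?thesis
  proof (intro exI allI)
    fix x y :: "real^'n"
    define a where "a = x - (1/2) *\<^sub>R y"
    define b where "b = x + (1/2) *\<^sub>R y"
    define Q where "Q = (\<Prod>i\<in>UNIV. (1 + (y$i)^2))"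
    have Qpos: "Q > 0" unfolding Q_def by (intro prod_pos) (simp add: add_pos_nonneg)
    have rhoQ: "rho y = inverse Q" unfolding rho_def Q_def using prod_inversef[of "\<lambda>i. 1 + (y$i)^2" UNIV] by (simp add: comp_def)
    have nh: "norm (hk chi k us ws x y) = (\<Prod>i\<in>UNIV. \<bar>y$i\<bar>^(k i)) * norm (iter_dderiv us chi a) * norm (iter_dderiv ws chi b)"
      unfolding hk_def ypow_def a_def b_def by (simp add: norm_mult prod_norm[symmetric] norm_power)
    have "norm (hk chi k us ws x y) * Q = (\<Prod>i\<in>UNIV. \<bar>y$i\<bar>^(k i) * (1 + (y$i)^2)) * (norm (iter_dderiv us chi a) * norm (iter_dderiv ws chi b))"
      unfolding nh Q_def by (simp add: prod.distrib)
    also have "\<dots> \<le> (\<Prod>i\<in>UNIV. 2^N * ((1 + (a$i)^2)^N * (1 + (b$i)^2)^N)) * (norm (iter_dderiv us chi a) * norm (iter_dderiv ws chi b))"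
      by (intro mult_right_mono prod_mono conjI scalar_ineq kN) (auto simp: a_def b_def)
    also have "\<dots> = (2^N)^CARD('n) * (((\<Prod>i\<in>UNIV. (1 + (a$i)^2)^N) * norm (iter_dderiv us chi a)) * ((\<Prod>i\<in>UNIV. (1 + (b$i)^2)^N) * norm (iter_dderiv ws chi b)))"
      by (simp add: prod.distrib ac_simps)
    also have "\<dots> \<le> (2^N)^CARD('n) * (C1 * C2)"
      by (intro mult_left_mono mult_mono C1 C2) (auto intro!: mult_nonneg_nonneg prod_nonneg c1)
    finally have "norm (hk chi k us ws x y) * Q \<le> (2^N)^CARD('n) * (C1 * C2)" .
    then show "norm (hk chi k us ws x y) \<le> ((2^N)^CARD('n) * (C1 * C2)) * rho y"
      unfolding rhoQ using Qpos by (simp add: field_simps)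
  qed
qed

end

lemma Basis_vec_image: "(Basis :: (real^'n::finite) set) = (\<lambda>i. axis i 1) ` UNIV"
  by (auto simp: Basis_vec_def)

lemma rho_Basis: "rho y = (\<Prod>b\<in>(Basis :: (real^'n::finite) set). inverse (1 + (y \<bullet> b)^2))"
proof -
  have inj: "inj_on (\<lambda>i::'n. axis i (1::real)) UNIV" by (auto simp: inj_on_def axis_eq_axis)
  show ?thesis unfolding Basis_vec_image rho_def prod.reindex[OF inj]
    by (simp add: cart_eq_inner_axis)
qed

lemma integrable_g: "integrable lborel (\<lambda>x::real. inverse (1 + x^2))"
proof -
  have "set_integrable lborel (einterval (-\<infinity>) \<infinity>) (\<lambda>x::real. inverse (1 + x^2))"
    by (rule integrable_inverse_1_plus_square)
  moreover have "einterval (-\<infinity>) \<infinity> = UNIV" by (auto simp: einterval_def)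
  ultimately show ?thesis by (simp add: set_integrable_def)
qed

lemma rho_meas[measurable]: "rho \<in> borel_measurable borel"
  unfolding rho_def by measurable

lemma integrable_rho: "integrable lborel (rho :: real^'n::finite \<Rightarrow> real)"
proof -
  have fin: "(\<integral>\<^sup>+x. ennreal (inverse (1 + x^2)) \<partial>lborel) < \<infinity>"
    using integrable_g unfolding integrable_iff_bounded by (simp add: add_pos_nonneg)
  have "(\<integral>\<^sup>+y. ennreal (norm (rho y)) \<partial>(lborel :: (real^'n) measure))
      = (\<integral>\<^sup>+y. (\<Prod>b\<in>Basis. ennreal (inverse (1 + (y \<bullet> b)^2))) \<partial>(lborel :: (real^'n) measure))"
  proof (intro nn_integral_cong)
    fix y :: "real^'n"
    have "norm (rho y) = rho y" using rho_pos[of y] by simp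
    also have "\<dots> = (\<Prod>b\<in>Basis. inverse (1 + (y \<bullet> b)^2))" by (rule rho_Basis)
    finally show "ennreal (norm (rho y)) = (\<Prod>b\<in>Basis. ennreal (inverse (1 + (y \<bullet> b)^2)))"
      by (simp add: prod_ennreal add_pos_nonneg del: inverse_eq_divide)
  qed
  also have "\<dots> = (\<Prod>b\<in>(Basis :: (real^'n) set). (\<integral>\<^sup>+x. ennreal (inverse (1 + x^2)) \<partial>lborel))"
    by (rule nn_integral_lborel_prod) auto
  also have "\<dots> < \<infinity>"
  proof -
    obtain r where "r \<ge> 0" "(\<integral>\<^sup>+x. ennreal (inverse (1 + x^2)) \<partial>lborel) = ennreal r"
      using fin less_top_ennreal by auto
    then show ?thesis by (simp add: ennreal_power)
  qed
  finally show ?thesis unfolding integrable_iff_bounded by simp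
qed

type_synonym 'n trm = "('n \<Rightarrow> nat) \<times> (real^'n) list \<times> (real^'n) list"

definition FT :: "(real^'n::finite \<Rightarrow> complex) \<Rightarrow> 'n trm \<Rightarrow> 'n phase \<Rightarrow> complex" where
  "FT chi t g = (LINT y|lborel. exp (\<i> * complex_of_real (snd g \<bullet> y)) * hk chi (fst t) (fst (snd t)) (snd (snd t)) (fst g) y)"

lemma ypow_upd: "ypow (k(j := Suc (k j))) y = y$j * ypow k y"
proof -
  have "ypow (k(j := Suc (k j))) y = (\<Prod>i\<in>UNIV. (if i = j then y$j else 1) * (y$i)^(k i))"
    unfolding ypow_def by (intro prod.cong refl) auto
  also have "\<dots> = (\<Prod>i\<in>UNIV. (if i = j then y$j else 1)) * ypow k y"
    unfolding ypow_def by (simp add: prod.distrib)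
  also have "(\<Prod>i\<in>UNIV. (if i = j then y$j else 1)) = y$j"
    by (simp add: prod.delta)
  finally show ?thesis .
qed

lemma ypow_meas[measurable]: "ypow k \<in> borel_measurable borel"
  unfolding ypow_def by measurable

lemma exp_line:
  "((\<lambda>s. exp (\<i> * complex_of_real (A + s * B))) has_vector_derivative
     (\<i> * complex_of_real B) * exp (\<i> * complex_of_real (A + s * B))) (at s)"
proof -
  have "((\<lambda>z. exp (\<i> * (complex_of_real A + z * complex_of_real B))) has_field_derivative
     exp (\<i> * (complex_of_real A + complex_of_real s * complex_of_real B)) * (\<i> * complex_of_real B)) (at (complex_of_real s))"
    by (auto intro!: derivative_eq_intros)
  from has_vector_derivative_real_field[OF this, of UNIV]
  show ?thesis by (simp add: ac_simps)
qed

lemma abs_inner_le: "\<bar>(a::real^'n::finite) \<bullet> y\<bar> \<le> (\<Sum>j\<in>UNIV. \<bar>a$j\<bar> * \<bar>y$j\<bar>)"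
  unfolding inner_vec_def by (rule order_trans[OF sum_abs]) (simp add: abs_mult)

context
  fixes chi :: "real^'n::finite \<Rightarrow> complex"
  assumes sch: "schwartz chi"
begin

lemma chi_cont_aff: "continuous_on UNIV (\<lambda>y. iter_dderiv us chi (x + c *\<^sub>R y))"
  by (rule continuous_on_compose2[OF chi_cont[OF sch]]) (auto intro!: continuous_intros)

lemma ypow_cont: "continuous_on UNIV (ypow k)"
  unfolding ypow_def by (auto intro!: continuous_intros continuous_on_component)

lemma hk_cont: "continuous_on UNIV (hk chi k us ws x)"
proof -
  have e: "hk chi k us ws x = (\<lambda>y. complex_of_real (ypow k y) * iter_dderiv us chi (x + (-1/2) *\<^sub>R y) * cnj (iter_dderiv ws chi (x + (1/2) *\<^sub>R y)))"
    unfolding hk_def by (intro ext) (simp add: algebra_simps)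
  show ?thesis unfolding e
    by (intro continuous_intros chi_cont_aff continuous_on_of_real ypow_cont)
qed

lemma hk_meas[measurable]: "hk chi k us ws x \<in> borel_measurable borel"
  by (rule borel_measurable_continuous_onI[OF hk_cont])

lemma FT_integrand_integrable:
  "integrable lborel (\<lambda>y. exp (\<i> * complex_of_real (p \<bullet> y)) * hk chi k us ws x y)"
proof -
  obtain C where C: "\<And>x y. norm (hk chi k us ws x y) \<le> C * rho y" using hk_dom[OF sch] by blast
  show ?thesis
  proof (rule Bochner_Integration.integrable_bound[where f="\<lambda>y. C * rho y"])
    show "integrable lborel (\<lambda>y. C * rho y)" by (intro integrable_mult_right integrable_rho)
    show "(\<lambda>y. exp (\<i> * complex_of_real (p \<bullet> y)) * hk chi k us ws x y) \<in> borel_measurable lborel"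
      by measurable
    show "AE y in lborel. norm (exp (\<i> * complex_of_real (p \<bullet> y)) * hk chi k us ws x y) \<le> norm (C * rho y)"
      using C by (auto intro!: AE_I2 order_trans[OF _ abs_ge_self] simp: norm_mult)
  qed
qed

end

context
  fixes chi :: "real^'n::finite \<Rightarrow> complex"
  assumes sch: "schwartz chi"
begin

lemmas hkm[measurable] = hk_meas[OF sch]

lemma hk_upd: "hk chi (k(j := Suc (k j))) us ws x y = complex_of_real (y$j) * hk chi k us ws x y"
  unfolding hk_def ypow_upd by simp

lemma hk_line:
  "((\<lambda>s. hk chi k us ws (x + s *\<^sub>R w) y) has_vector_derivative
     (hk chi k (w#us) ws (x + s *\<^sub>R w) y + hk chi k us (w#ws) (x + s *\<^sub>R w) y)) (at s)"
proof -
  define c where "c = complex_of_real (ypow k y)"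
  have eq: "(\<lambda>s. hk chi k us ws (x + s *\<^sub>R w) y) =
    (\<lambda>s. c * iter_dderiv us chi ((x - (1/2) *\<^sub>R y) + s *\<^sub>R w) * cnj (iter_dderiv ws chi ((x + (1/2) *\<^sub>R y) + s *\<^sub>R w)))"
    unfolding hk_def c_def by (intro ext) (simp add: algebra_simps)
  have "((\<lambda>s. c * iter_dderiv us chi ((x - (1/2) *\<^sub>R y) + s *\<^sub>R w) * cnj (iter_dderiv ws chi ((x + (1/2) *\<^sub>R y) + s *\<^sub>R w)))
     has_vector_derivative
      (c * iter_dderiv us chi ((x - (1/2) *\<^sub>R y) + s *\<^sub>R w) * cnj (iter_dderiv (w#ws) chi ((x + (1/2) *\<^sub>R y) + s *\<^sub>R w))
      + c * iter_dderiv (w#us) chi ((x - (1/2) *\<^sub>R y) + s *\<^sub>R w) * cnj (iter_dderiv ws chi ((x + (1/2) *\<^sub>R y) + s *\<^sub>R w)))) (at s)"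
    by (intro has_vector_derivative_mult has_vector_derivative_mult_right has_vector_derivative_cnj chi_line[OF sch])
  moreover have "c * iter_dderiv us chi ((x - (1/2) *\<^sub>R y) + s *\<^sub>R w) * cnj (iter_dderiv (w#ws) chi ((x + (1/2) *\<^sub>R y) + s *\<^sub>R w))
      + c * iter_dderiv (w#us) chi ((x - (1/2) *\<^sub>R y) + s *\<^sub>R w) * cnj (iter_dderiv ws chi ((x + (1/2) *\<^sub>R y) + s *\<^sub>R w))
      = hk chi k (w#us) ws (x + s *\<^sub>R w) y + hk chi k us (w#ws) (x + s *\<^sub>R w) y"
    unfolding hk_def c_def by (simp add: algebra_simps)
  ultimately show ?thesis unfolding eq by simp
qed

lemma FT_deriv:
  "((\<lambda>s. FT chi (k,us,ws) (g + s *\<^sub>R v)) has_vector_derivative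
     ((\<Sum>j\<in>UNIV. (\<i> * complex_of_real (snd v $ j)) * FT chi (k(j := Suc (k j)), us, ws) g)
      + FT chi (k, fst v # us, ws) g + FT chi (k, us, fst v # ws) g)) (at 0)"
proof -
  define x where "x = fst g"
  define p where "p = snd g"
  define vx where "vx = fst v"
  define vp where "vp = snd v"
  define f where "f s y = exp (\<i> * complex_of_real (p \<bullet> y + s * (vp \<bullet> y))) * hk chi k us ws (x + s *\<^sub>R vx) y" for s y
  define f' where "f' s y = exp (\<i> * complex_of_real (p \<bullet> y + s * (vp \<bullet> y))) *
     ((\<i> * complex_of_real (vp \<bullet> y)) * hk chi k us ws (x + s *\<^sub>R vx) y + hk chi k (vx#us) ws (x + s *\<^sub>R vx) y + hk chi k us (vx#ws) (x + s *\<^sub>R vx) y)" for s y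
  have FTf: "FT chi (k,us,ws) (g + s *\<^sub>R v) = (\<integral>y. f s y \<partial>lborel)" for s
    unfolding FT_def f_def x_def p_def vx_def vp_def by (simp add: inner_add_left)
  have "\<forall>j. \<exists>C. \<forall>x y. norm (hk chi (k(j := Suc (k j))) us ws x y) \<le> C * rho y"
    using hk_dom[OF sch] by blast
  then obtain Cj where Cj: "\<And>j x y. norm (hk chi (k(j := Suc (k j))) us ws x y) \<le> Cj j * rho y" by metis
  obtain C1 where C1: "\<And>x y. norm (hk chi k (vx#us) ws x y) \<le> C1 * rho y" using hk_dom[OF sch] by blast
  obtain C2 where C2: "\<And>x y. norm (hk chi k us (vx#ws) x y) \<le> C2 * rho y" using hk_dom[OF sch] by blast
  define K where "K = (\<Sum>j\<in>UNIV. \<bar>vp$j\<bar> * Cj j) + C1 + C2"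
  have inner_sum: "complex_of_real (vp \<bullet> y) * hk chi k us ws x' y = (\<Sum>j\<in>UNIV. complex_of_real (vp$j) * hk chi (k(j := Suc (k j))) us ws x' y)" for x' y
    unfolding hk_upd inner_vec_def of_real_sum sum_distrib_right by (simp add: mult.assoc)
  have bnd: "norm (f' s y) \<le> K * rho y" for s y
  proof -
    let ?x = "x + s *\<^sub>R vx"
    let ?A = "(\<i> * complex_of_real (vp \<bullet> y)) * hk chi k us ws ?x y"
    let ?B = "hk chi k (vx#us) ws ?x y"
    let ?C = "hk chi k us (vx#ws) ?x y"
    have "norm (f' s y) = norm (?A + ?B + ?C)" unfolding f'_def norm_mult by simp
    also have "\<dots> \<le> norm ?A + norm ?B + norm ?C"
      by (rule order_trans[OF norm_triangle_ineq add_right_mono[OF norm_triangle_ineq]])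
    also have "norm ?A = norm (complex_of_real (vp \<bullet> y) * hk chi k us ws ?x y)"
      by (simp add: norm_mult)
    also have "\<dots> \<le> (\<Sum>j\<in>UNIV. \<bar>vp$j\<bar> * (Cj j * rho y))"
      unfolding inner_sum by (rule order_trans[OF norm_sum sum_mono]) (simp add: norm_mult Cj mult_left_mono)
    also have "(\<Sum>j\<in>UNIV. \<bar>vp$j\<bar> * (Cj j * rho y)) = (\<Sum>j\<in>UNIV. \<bar>vp$j\<bar> * Cj j) * rho y"
      by (simp add: sum_distrib_right mult.assoc)
    finally have "norm (f' s y) \<le> (\<Sum>j\<in>UNIV. \<bar>vp$j\<bar> * Cj j) * rho y + norm ?B + norm ?C" by simp
    moreover have "K * rho y = (\<Sum>j\<in>UNIV. \<bar>vp$j\<bar> * Cj j) * rho y + C1 * rho y + C2 * rho y"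
      unfolding K_def by (simp add: distrib_right)
    ultimately show ?thesis using C1[of ?x y] C2[of ?x y] by linarith
  qed
  have der: "((\<lambda>s. f s y) has_vector_derivative f' s y) (at s)" for s y
  proof -
    have "((\<lambda>s. f s y) has_vector_derivative
       (exp (\<i> * complex_of_real (p \<bullet> y + s * (vp \<bullet> y))) * (hk chi k (vx#us) ws (x + s *\<^sub>R vx) y + hk chi k us (vx#ws) (x + s *\<^sub>R vx) y)
        + (\<i> * complex_of_real (vp \<bullet> y)) * exp (\<i> * complex_of_real (p \<bullet> y + s * (vp \<bullet> y))) * hk chi k us ws (x + s *\<^sub>R vx) y)) (at s)"
      unfolding f_def by (intro has_vector_derivative_mult exp_line hk_line)
    then show ?thesis unfolding f'_def by (simp add: algebra_simps)
  qed
  have "((\<lambda>s. \<integral>y. f s y \<partial>lborel) has_vector_derivative (\<integral>y. f' 0 y \<partial>lborel)) (at 0)"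
  proof (rule DUI[where B="\<lambda>y. K * rho y"])
    show "f s \<in> borel_measurable lborel" for s unfolding f_def by measurable
    show "f' s \<in> borel_measurable lborel" for s unfolding f'_def by measurable
    show "integrable lborel (f 0)" unfolding f_def using FT_integrand_integrable[OF sch] by simp
    show "integrable lborel (\<lambda>y. K * rho y)" by (intro integrable_mult_right integrable_rho)
  qed (use der bnd in auto)
  moreover have "(\<integral>y. f' 0 y \<partial>lborel) = (\<Sum>j\<in>UNIV. (\<i> * complex_of_real (snd v $ j)) * FT chi (k(j := Suc (k j)), us, ws) g)
      + FT chi (k, fst v # us, ws) g + FT chi (k, us, fst v # ws) g"
  proof -
    define E where "E t y = exp (\<i> * complex_of_real (p \<bullet> y)) * hk chi (fst t) (fst (snd t)) (snd (snd t)) x y" for t y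
    have intE: "integrable lborel (E t)" for t unfolding E_def by (rule FT_integrand_integrable[OF sch])
    have FTE: "FT chi t g = (\<integral>y. E t y \<partial>lborel)" for t unfolding FT_def E_def x_def p_def by simp
    have "f' 0 y = (\<Sum>j\<in>UNIV. (\<i> * complex_of_real (vp $ j)) * E (k(j := Suc (k j)), us, ws) y) + E (k, vx # us, ws) y + E (k, us, vx # ws) y" for y
    proof -
      have "(\<i> * complex_of_real (vp \<bullet> y)) * hk chi k us ws x y = \<i> * (complex_of_real (vp \<bullet> y) * hk chi k us ws x y)" by simp
      then show ?thesis unfolding f'_def E_def
        by (simp add: inner_sum sum_distrib_left sum_distrib_right algebra_simps)
    qed
    then have "(\<integral>y. f' 0 y \<partial>lborel) = (\<integral>y. (\<Sum>j\<in>UNIV. (\<i> * complex_of_real (vp $ j)) * E (k(j := Suc (k j)), us, ws) y) + E (k, vx # us, ws) y + E (k, us, vx # ws) y \<partial>lborel)"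
      by simp
    also have "\<dots> = (\<Sum>j\<in>UNIV. (\<i> * complex_of_real (vp $ j)) * (\<integral>y. E (k(j := Suc (k j)), us, ws) y \<partial>lborel)) + (\<integral>y. E (k, vx # us, ws) y \<partial>lborel) + (\<integral>y. E (k, us, vx # ws) y \<partial>lborel)"
      using intE by (simp add: integral_sum)
    finally show ?thesis unfolding FTE vp_def vx_def .
  qed
  ultimately show ?thesis unfolding FTf by simp
qed

end

definition lsmooth :: "('a::real_normed_vector \<Rightarrow> complex) \<Rightarrow> bool" where
  "lsmooth F \<longleftrightarrow> (\<forall>ws g v. (\<lambda>t. iter_dderiv ws F (g + t *\<^sub>R v)) differentiable (at 0))"

lemma idx_list_prop: "distinct (idx_list :: 'n::finite list) \<and> set (idx_list :: 'n list) = UNIV"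
proof -
  have ex: "\<exists>xs::'n list. distinct xs \<and> set xs = UNIV" using finite_distinct_list[of "UNIV::'n set"] by auto
  show ?thesis unfolding idx_list_def by (rule someI_ex[OF ex])
qed

lemma sum_idx_list: "sum_list (map f (idx_list :: 'n::finite list)) = sum f UNIV"
  using idx_list_prop[where 'n='n] sum_list_distinct_conv_sum_set[of "idx_list::'n list" f] by simp

definition Fsum :: "(real^'n::finite \<Rightarrow> complex) \<Rightarrow> (complex \<times> 'n trm) list \<Rightarrow> 'n phase \<Rightarrow> complex" where
  "Fsum chi L g = sum_list (map (\<lambda>(c,t). c * FT chi t g) L)"

definition dterm :: "'n::finite phase \<Rightarrow> 'n trm \<Rightarrow> (complex \<times> 'n trm) list" where
  "dterm v t = map (\<lambda>j. (\<i> * complex_of_real (snd v $ j), ((fst t)(j := Suc (fst t j)), fst (snd t), snd (snd t)))) idx_list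
     @ [(1, (fst t, fst v # fst (snd t), snd (snd t))), (1, (fst t, fst (snd t), fst v # snd (snd t)))]"

definition dlist :: "'n::finite phase \<Rightarrow> (complex \<times> 'n trm) list \<Rightarrow> (complex \<times> 'n trm) list" where
  "dlist v L = concat (map (\<lambda>(c,t). map (\<lambda>(c',t'). (c * c', t')) (dterm v t)) L)"

context
  fixes chi :: "real^'n::finite \<Rightarrow> complex"
  assumes sch: "schwartz chi"
begin

lemma Fsum_deriv: "((\<lambda>s. Fsum chi L (g + s *\<^sub>R v)) has_vector_derivative Fsum chi (dlist v L) g) (at 0)"
proof (induction L)
  case Nil
  then show ?case by (simp add: Fsum_def dlist_def)
next
  case (Cons a L)
  obtain c k us ws where a: "a = (c, (k, us, ws))" by (cases a) auto
  have d1: "((\<lambda>s. c * FT chi (k,us,ws) (g + s *\<^sub>R v)) has_vector_derivative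
     c * ((\<Sum>j\<in>UNIV. (\<i> * complex_of_real (snd v $ j)) * FT chi (k(j := Suc (k j)), us, ws) g)
      + FT chi (k, fst v # us, ws) g + FT chi (k, us, fst v # ws) g)) (at 0)"
    by (intro has_vector_derivative_mult_right FT_deriv[OF sch])
  have e: "Fsum chi (dlist v (a # L)) g = c * ((\<Sum>j\<in>UNIV. (\<i> * complex_of_real (snd v $ j)) * FT chi (k(j := Suc (k j)), us, ws) g)
      + FT chi (k, fst v # us, ws) g + FT chi (k, us, fst v # ws) g) + Fsum chi (dlist v L) g"
    unfolding a by (simp add: Fsum_def dlist_def dterm_def comp_def sum_idx_list[symmetric] sum_list_const_mult algebra_simps)
  have "((\<lambda>s. c * FT chi (k,us,ws) (g + s *\<^sub>R v) + Fsum chi L (g + s *\<^sub>R v)) has_vector_derivative Fsum chi (dlist v (a # L)) g) (at 0)"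
    unfolding e by (intro has_vector_derivative_add d1 Cons.IH)
  then show ?case unfolding a by (simp add: Fsum_def)
qed

lemma Fsum_dderiv: "dderiv v (Fsum chi L) = Fsum chi (dlist v L)"
  by (intro ext) (simp add: dderiv_def vector_derivative_at[OF Fsum_deriv])

lemma Fsum_iter: "iter_dderiv ws (Fsum chi L) = Fsum chi (foldr dlist ws L)"
  by (induction ws) (simp_all add: iter_dderiv_Nil iter_dderiv_Cons Fsum_dderiv)

lemma Fsum_lsmooth: "lsmooth (Fsum chi L)"
proof (unfold lsmooth_def, intro allI)
  fix ws g v
  show "(\<lambda>t. iter_dderiv ws (Fsum chi L) (g + t *\<^sub>R v)) differentiable (at 0)"
    unfolding Fsum_iter by (rule differentiableI_vector[OF Fsum_deriv])
qed

lemma wigner_Fsum: "wigner (rank_one chi chi) = Fsum chi [(complex_of_real (1 / (2 * pi) ^ CARD('n)), ((\<lambda>_. 0), [], []))]"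
  by (intro ext) (simp add: wigner_def Fsum_def FT_def hk_def ypow_def rank_one_def iter_dderiv_Nil)

lemma wigner_lsmooth: "lsmooth (wigner (rank_one chi chi))"
  unfolding wigner_Fsum by (rule Fsum_lsmooth)

end

lemma pascal_sum:
  fixes L :: complex and A :: "nat \<Rightarrow> complex"
  shows "L * (\<Sum>j\<le>m. of_nat (m choose j) * L^j * A (m-j)) + (\<Sum>j\<le>m. of_nat (m choose j) * L^j * A (Suc (m - j)))
       = (\<Sum>j\<le>Suc m. of_nat (Suc m choose j) * L^j * A (Suc m - j))"
proof -
  have r: "(\<Sum>j\<le>Suc m. of_nat (Suc m choose j) * L^j * A (Suc m - j))
     = A (Suc m) + (\<Sum>i\<le>m. of_nat (m choose i) * L^(Suc i) * A (m - i)) + (\<Sum>i\<le>m. of_nat (m choose Suc i) * L^(Suc i) * A (m - i))"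
    by (subst sum.atMost_Suc_shift) (simp add: sum.distrib algebra_simps)
  have a: "L * (\<Sum>j\<le>m. of_nat (m choose j) * L^j * A (m-j)) = (\<Sum>i\<le>m. of_nat (m choose i) * L^(Suc i) * A (m - i))"
    by (simp add: sum_distrib_left algebra_simps)
  have b: "(\<Sum>j\<le>m. of_nat (m choose j) * L^j * A (Suc (m - j))) = A (Suc m) + (\<Sum>i\<le>m. of_nat (m choose Suc i) * L^(Suc i) * A (m - i))"
  proof (cases m)
    case 0 then show ?thesis by simp
  next
    case (Suc m')
    have "(\<Sum>j\<le>m. of_nat (m choose j) * L^j * A (Suc (m - j))) = A (Suc m) + (\<Sum>i\<le>m'. of_nat (m choose Suc i) * L^(Suc i) * A (Suc (m - Suc i)))"
      unfolding Suc by (subst sum.atMost_Suc_shift) simp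
    also have "(\<Sum>i\<le>m'. of_nat (m choose Suc i) * L^(Suc i) * A (Suc (m - Suc i))) = (\<Sum>i\<le>m'. of_nat (m choose Suc i) * L^(Suc i) * A (m - i))"
      by (intro sum.cong refl) (simp add: Suc Suc_diff_le)
    also have "\<dots> = (\<Sum>i\<le>m. of_nat (m choose Suc i) * L^(Suc i) * A (m - i))"
      unfolding Suc by (simp add: binomial_eq_0)
    finally show ?thesis .
  qed
  show ?thesis unfolding r a b by (simp add: algebra_simps)
qed

lemma lsmooth_deriv:
  assumes "lsmooth F"
  shows "((\<lambda>t. iter_dderiv ws F (g + t *\<^sub>R v)) has_vector_derivative iter_dderiv (v#ws) F g) (at 0)"
proof -
  have "(\<lambda>t. iter_dderiv ws F (g + t *\<^sub>R v)) differentiable (at 0)" using assms unfolding lsmooth_def by blast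
  then show ?thesis unfolding iter_dderiv_Cons dderiv_def vector_derivative_works .
qed

lemma lsmooth_iter: "lsmooth F \<Longrightarrow> lsmooth (iter_dderiv ws F)"
  unfolding lsmooth_def iter_dderiv_append[symmetric] by blast

lemma iter_lin:
  assumes fin: "finite J" and sm: "\<And>j. j \<in> J \<Longrightarrow> lsmooth (F j)"
  shows "iter_dderiv ws (\<lambda>g. \<Sum>j\<in>J. c j * F j g) = (\<lambda>g. \<Sum>j\<in>J. c j * iter_dderiv ws (F j) g)"
proof (induction ws)
  case Nil then show ?case by (simp add: iter_dderiv_Nil)
next
  case (Cons v ws)
  show ?case
  proof (rule ext)
    fix g
    have "((\<lambda>t. \<Sum>j\<in>J. c j * iter_dderiv ws (F j) (g + t *\<^sub>R v)) has_vector_derivative (\<Sum>j\<in>J. c j * iter_dderiv (v#ws) (F j) g)) (at 0)"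
      by (intro has_vector_derivative_sum has_vector_derivative_mult_right lsmooth_deriv sm)
    then show "iter_dderiv (v # ws) (\<lambda>g. \<Sum>j\<in>J. c j * F j g) g = (\<Sum>j\<in>J. c j * iter_dderiv (v # ws) (F j) g)"
      unfolding iter_dderiv_Cons Cons.IH dderiv_def by (rule vector_derivative_at)
  qed
qed

lemma lsmooth_lin:
  assumes fin: "finite J" and sm: "\<And>j. j \<in> J \<Longrightarrow> lsmooth (F j)"
  shows "lsmooth (\<lambda>g. \<Sum>j\<in>J. c j * F j g)"
proof (unfold lsmooth_def, intro allI)
  fix ws g v
  show "(\<lambda>t. iter_dderiv ws (\<lambda>g. \<Sum>j\<in>J. c j * F j g) (g + t *\<^sub>R v)) differentiable at 0"
  proof -
    have e: "iter_dderiv ws (\<lambda>g. \<Sum>j\<in>J. c j * F j g) = (\<lambda>g. \<Sum>j\<in>J. c j * iter_dderiv ws (F j) g)"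
      by (rule iter_lin[OF fin sm])
    show ?thesis unfolding e
    by (rule differentiableI_vector[where y="\<Sum>j\<in>J. c j * iter_dderiv (v#ws) (F j) g"]) (intro has_vector_derivative_sum has_vector_derivative_mult_right lsmooth_deriv sm)
  qed
qed

lemma iter_shift: "iter_dderiv ws (\<lambda>g. F (g - m)) = (\<lambda>g. iter_dderiv ws F (g - m))"
proof (induction ws)
  case Nil then show ?case by (simp add: iter_dderiv_Nil)
next
  case (Cons v ws)
  show ?case unfolding iter_dderiv_Cons Cons.IH dderiv_def
    by (intro ext) (simp add: algebra_simps)
qed

lemma lsmooth_shift: "lsmooth F \<Longrightarrow> lsmooth (\<lambda>g. F (g - m))"
  unfolding lsmooth_def iter_shift
proof (intro allI)
  fix ws g v assume "\<forall>ws g v. (\<lambda>t. iter_dderiv ws F (g + t *\<^sub>R v)) differentiable at 0"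
  then have "(\<lambda>t. iter_dderiv ws F ((g - m) + t *\<^sub>R v)) differentiable at 0" by blast
  then show "(\<lambda>t. iter_dderiv ws F (g + t *\<^sub>R v - m)) differentiable at 0" by (simp add: algebra_simps)
qed

definition Ph :: "'a::real_inner \<Rightarrow> real \<Rightarrow> 'a \<Rightarrow> complex" where
  "Ph l c0 g = exp (\<i> * complex_of_real (l \<bullet> g + c0))"

definition Lv :: "'a::real_inner \<Rightarrow> 'a \<Rightarrow> complex" where
  "Lv l v = \<i> * complex_of_real (l \<bullet> v)"

lemma dderiv_Ph:
  assumes "((\<lambda>t. H (g + t *\<^sub>R v)) has_vector_derivative D) (at 0)"
  shows "dderiv v (\<lambda>g. Ph l c0 g * H g) g = Ph l c0 g * (Lv l v * H g + D)"
proof -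
  have e: "(\<lambda>t. Ph l c0 (g + t *\<^sub>R v)) = (\<lambda>t. exp (\<i> * complex_of_real ((l \<bullet> g + c0) + t * (l \<bullet> v))))"
    unfolding Ph_def by (intro ext) (simp add: inner_add_right algebra_simps)
  have dP: "((\<lambda>t. Ph l c0 (g + t *\<^sub>R v)) has_vector_derivative (\<i> * complex_of_real (l \<bullet> v)) * exp (\<i> * complex_of_real ((l \<bullet> g + c0) + 0 * (l \<bullet> v)))) (at 0)"
    unfolding e by (rule exp_line)
  have "((\<lambda>t. Ph l c0 (g + t *\<^sub>R v) * H (g + t *\<^sub>R v)) has_vector_derivative
       (Ph l c0 (g + 0 *\<^sub>R v) * D + (\<i> * complex_of_real (l \<bullet> v)) * exp (\<i> * complex_of_real ((l \<bullet> g + c0) + 0 * (l \<bullet> v))) * H (g + 0 *\<^sub>R v))) (at 0)"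
    by (intro has_vector_derivative_mult dP assms[simplified])
  then show ?thesis unfolding dderiv_def
    by (subst vector_derivative_at) (auto simp: Ph_def Lv_def algebra_simps)
qed

lemma iter_rep:
  assumes sm: "lsmooth H"
  shows "iter_dderiv (replicate m v) (\<lambda>g. Ph l c0 g * H g) =
    (\<lambda>g. Ph l c0 g * (\<Sum>j\<le>m. of_nat (m choose j) * Lv l v ^ j * iter_dderiv (replicate (m - j) v) H g))"
proof (induction m)
  case 0 then show ?case by (simp add: iter_dderiv_Nil)
next
  case (Suc m)
  define S where "S g = (\<Sum>j\<le>m. (of_nat (m choose j) * Lv l v ^ j) * iter_dderiv (replicate (m - j) v) H g)" for g
  have smS: "lsmooth S" unfolding S_def by (intro lsmooth_lin lsmooth_iter sm) auto
  have dS: "((\<lambda>t. S (g + t *\<^sub>R v)) has_vector_derivative (\<Sum>j\<le>m. (of_nat (m choose j) * Lv l v ^ j) * iter_dderiv (replicate (Suc (m - j)) v) H g)) (at 0)" for g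
  proof -
    have "((\<lambda>t. iter_dderiv [] S (g + t *\<^sub>R v)) has_vector_derivative iter_dderiv [v] S g) (at 0)"
      by (rule lsmooth_deriv[OF smS])
    moreover have "iter_dderiv [v] S = (\<lambda>g. \<Sum>j\<le>m. (of_nat (m choose j) * Lv l v ^ j) * iter_dderiv [v] (iter_dderiv (replicate (m - j) v) H) g)"
      unfolding S_def by (intro iter_lin lsmooth_iter sm) auto
    ultimately show ?thesis by (simp add: iter_dderiv_Nil iter_dderiv_append[symmetric])
  qed
  have "iter_dderiv (replicate (Suc m) v) (\<lambda>g. Ph l c0 g * H g) = dderiv v (\<lambda>g. Ph l c0 g * S g)"
    unfolding replicate_Suc iter_dderiv_Cons Suc.IH S_def by (simp add: mult.assoc)
  also have "\<dots> = (\<lambda>g. Ph l c0 g * (Lv l v * S g + (\<Sum>j\<le>m. (of_nat (m choose j) * Lv l v ^ j) * iter_dderiv (replicate (Suc (m - j)) v) H g)))"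
    by (intro ext dderiv_Ph dS)
  also have "\<dots> = (\<lambda>g. Ph l c0 g * (\<Sum>j\<le>Suc m. of_nat (Suc m choose j) * Lv l v ^ j * iter_dderiv (replicate (Suc m - j) v) H g))"
  proof (intro ext arg_cong[where f="\<lambda>z. Ph l c0 _ * z"])
    fix g
    show "Lv l v * S g + (\<Sum>j\<le>m. (of_nat (m choose j) * Lv l v ^ j) * iter_dderiv (replicate (Suc (m - j)) v) H g) =
          (\<Sum>j\<le>Suc m. of_nat (Suc m choose j) * Lv l v ^ j * iter_dderiv (replicate (Suc m - j) v) H g)"
      using pascal_sum[of "Lv l v" m "\<lambda>r. iter_dderiv (replicate r v) H g"] unfolding S_def by simp
  qed
  finally show ?case .
qed

definition blocks :: "('k \<Rightarrow> 'a) \<Rightarrow> 'k list \<Rightarrow> ('k \<Rightarrow> nat) \<Rightarrow> 'a list" where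
  "blocks dir ks n = concat (map (\<lambda>k. replicate (n k) (dir k)) ks)"

definition CS :: "'k list \<Rightarrow> ('k \<Rightarrow> nat) \<Rightarrow> ('k \<Rightarrow> nat) set" where
  "CS ks n = {c. (\<forall>k. c k \<le> n k) \<and> (\<forall>k. k \<notin> set ks \<longrightarrow> c k = 0)}"

lemma finite_CS: "finite (CS ks (n :: 'k::finite \<Rightarrow> nat))"
proof (rule finite_subset)
  show "CS ks n \<subseteq> PiE UNIV (\<lambda>k. {..n k})" unfolding CS_def by auto
  show "finite (PiE (UNIV::'k set) (\<lambda>k. {..n k}))" by (rule finite_PiE) auto
qed

lemma blocks_cong: "(\<And>k. k \<in> set ks \<Longrightarrow> n k = n' k) \<Longrightarrow> blocks dir ks n = blocks dir ks n'"
  unfolding blocks_def by (metis (mono_tags, lifting) map_eq_conv)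

lemma iter_blocks:
  fixes ks :: "'k::finite list" and H :: "'a::real_inner \<Rightarrow> complex"
  assumes sm: "lsmooth H"
  shows "distinct ks \<Longrightarrow> iter_dderiv (blocks dir ks n) (\<lambda>g. Ph l c0 g * H g) =
    (\<lambda>g. Ph l c0 g * (\<Sum>c\<in>CS ks n. (\<Prod>k\<in>set ks. of_nat (n k choose c k) * Lv l (dir k) ^ c k) * iter_dderiv (blocks dir ks (\<lambda>k. n k - c k)) H g))"
proof (induction ks)
  case Nil
  have "CS [] n = {\<lambda>_. 0}" unfolding CS_def by auto
  then show ?case by (simp add: blocks_def iter_dderiv_Nil)
next
  case (Cons k ks)
  have kn: "k \<notin> set ks" and dks: "distinct ks" using Cons.prems by auto
  define coef where "coef c = (\<Prod>k\<in>set ks. of_nat (n k choose c k) * Lv l (dir k) ^ c k)" for c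
  define S where "S g = (\<Sum>c\<in>CS ks n. coef c * iter_dderiv (blocks dir ks (\<lambda>k. n k - c k)) H g)" for g
  have smS: "lsmooth S" unfolding S_def by (intro lsmooth_lin lsmooth_iter sm finite_CS)
  have iterS: "iter_dderiv ws S = (\<lambda>g. \<Sum>c\<in>CS ks n. coef c * iter_dderiv (ws @ blocks dir ks (\<lambda>k. n k - c k)) H g)" for ws
    unfolding S_def iter_dderiv_append by (intro iter_lin lsmooth_iter sm finite_CS)
  have "iter_dderiv (blocks dir (k#ks) n) (\<lambda>g. Ph l c0 g * H g) = iter_dderiv (replicate (n k) (dir k)) (\<lambda>g. Ph l c0 g * S g)"
  proof -
    have e: "blocks dir (k#ks) n = replicate (n k) (dir k) @ blocks dir ks n" by (simp add: blocks_def)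
    show ?thesis unfolding e iter_dderiv_append Cons.IH[OF dks] S_def coef_def by simp
  qed
  also have "\<dots> = (\<lambda>g. Ph l c0 g * (\<Sum>j\<le>n k. of_nat (n k choose j) * Lv l (dir k) ^ j * iter_dderiv (replicate (n k - j) (dir k)) S g))"
    by (rule iter_rep[OF smS])
  also have "\<dots> = (\<lambda>g. Ph l c0 g * (\<Sum>c\<in>CS (k#ks) n. (\<Prod>k\<in>set (k#ks). of_nat (n k choose c k) * Lv l (dir k) ^ c k) * iter_dderiv (blocks dir (k#ks) (\<lambda>k. n k - c k)) H g))"
  proof (intro ext arg_cong[where f="\<lambda>z. Ph l c0 _ * z"])
    fix g
    have "(\<Sum>j\<le>n k. of_nat (n k choose j) * Lv l (dir k) ^ j * iter_dderiv (replicate (n k - j) (dir k)) S g)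
       = (\<Sum>j\<le>n k. \<Sum>c\<in>CS ks n. of_nat (n k choose j) * Lv l (dir k) ^ j * coef c * iter_dderiv (replicate (n k - j) (dir k) @ blocks dir ks (\<lambda>k. n k - c k)) H g)"
      unfolding iterS by (simp add: sum_distrib_left mult.assoc)
    also have "\<dots> = (\<Sum>jc\<in>{..n k} \<times> CS ks n. of_nat (n k choose fst jc) * Lv l (dir k) ^ fst jc * coef (snd jc) * iter_dderiv (replicate (n k - fst jc) (dir k) @ blocks dir ks (\<lambda>k. n k - snd jc k)) H g)"
      by (simp add: sum.cartesian_product case_prod_beta)
    also have "\<dots> = (\<Sum>c\<in>CS (k#ks) n. (\<Prod>k\<in>set (k#ks). of_nat (n k choose c k) * Lv l (dir k) ^ c k) * iter_dderiv (blocks dir (k#ks) (\<lambda>k. n k - c k)) H g)"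
    proof (rule sum.reindex_bij_witness[where j="\<lambda>jc. (snd jc)(k := fst jc)" and i="\<lambda>c. (c k, c(k := 0))"])
      fix jc assume jc: "jc \<in> {..n k} \<times> CS ks n"
      then have jk: "snd jc k = 0" using kn unfolding CS_def by auto
      show "(((snd jc)(k := fst jc)) k, ((snd jc)(k := fst jc))(k := 0)) = jc"
        using jk by (cases jc) (auto simp: fun_eq_iff)
      show "(snd jc)(k := fst jc) \<in> CS (k # ks) n" using jc unfolding CS_def by auto
      define c where "c = (snd jc)(k := fst jc)"
      have bl: "blocks dir ks (\<lambda>k'. n k' - snd jc k') = blocks dir ks (\<lambda>k'. n k' - c k')"
        by (rule blocks_cong) (use kn in \<open>auto simp: c_def\<close>)
      have pr: "coef (snd jc) = (\<Prod>k\<in>set ks. of_nat (n k choose c k) * Lv l (dir k) ^ c k)"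
        unfolding coef_def by (rule prod.cong) (use kn in \<open>auto simp: c_def\<close>)
      have ck: "c k = fst jc" by (simp add: c_def)
      show "(\<Prod>k'\<in>set (k # ks). of_nat (n k' choose ((snd jc)(k := fst jc)) k') * Lv l (dir k') ^ ((snd jc)(k := fst jc)) k') *
          iter_dderiv (blocks dir (k # ks) (\<lambda>k'. n k' - ((snd jc)(k := fst jc)) k')) H g =
          of_nat (n k choose fst jc) * Lv l (dir k) ^ fst jc * coef (snd jc) *
          iter_dderiv (replicate (n k - fst jc) (dir k) @ blocks dir ks (\<lambda>k'. n k' - snd jc k')) H g"
        unfolding c_def[symmetric] bl pr using kn ck by (simp add: blocks_def mult.assoc)
    next
      fix c assume c: "c \<in> CS (k#ks) n"
      show "(snd (c k, c(k := 0)))(k := fst (c k, c(k := 0))) = c" by simp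
      show "(c k, c(k := 0)) \<in> {..n k} \<times> CS ks n" using c unfolding CS_def by auto
    qed
    finally show "(\<Sum>j\<le>n k. of_nat (n k choose j) * Lv l (dir k) ^ j * iter_dderiv (replicate (n k - j) (dir k)) S g) =
       (\<Sum>c\<in>CS (k#ks) n. (\<Prod>k\<in>set (k#ks). of_nat (n k choose c k) * Lv l (dir k) ^ c k) * iter_dderiv (blocks dir (k#ks) (\<lambda>k. n k - c k)) H g)" .
  qed
  finally show ?case .
qed

definition dirf :: "'n + 'n \<Rightarrow> 'n::finite phase" where
  "dirf k = (case k of Inl i \<Rightarrow> (axis i 1, 0) | Inr i \<Rightarrow> (0, axis i 1))"

definition keys :: "('n::finite + 'n) list" where
  "keys = map Inl idx_list @ map Inr idx_list"

definition nb :: "'n midx \<Rightarrow> 'n + 'n \<Rightarrow> nat" where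
  "nb b = case_sum (fst b) (snd b)"

definition Lpow :: "'n::finite phase \<Rightarrow> 'n midx \<Rightarrow> complex" where
  "Lpow l c = (\<Prod>i\<in>UNIV. Lv l (axis i 1, 0) ^ fst c i) * (\<Prod>i\<in>UNIV. Lv l (0, axis i 1) ^ snd c i)"

lemma keys_prop: "distinct (keys :: ('n::finite + 'n) list) \<and> set (keys :: ('n + 'n) list) = UNIV"
  using idx_list_prop[where 'n='n] unfolding keys_def
  by (auto simp: distinct_map inj_on_def UNIV_sum)

lemma prod_UNIV_sum: "(\<Prod>k\<in>(UNIV :: ('n::finite + 'n) set). f k) = (\<Prod>i\<in>UNIV. f (Inl i)) * (\<Prod>i\<in>UNIV. (f (Inr i) :: 'a::comm_monoid_mult))"
  using prod.Plus[of "UNIV::'n set" "UNIV::'n set" f] by (simp add: comp_def)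

lemma blocks_phase_dirs: "blocks dirf keys (\<lambda>k. nb b k - c k) = phase_dirs (mi_sub b (c \<circ> Inl, c \<circ> Inr))"
  unfolding blocks_def keys_def phase_dirs_def nb_def mi_sub_def dirf_def by (simp add: comp_def)

lemma blocks_phase_dirs0: "blocks dirf keys (nb b) = phase_dirs b"
  unfolding blocks_def keys_def phase_dirs_def nb_def dirf_def by (simp add: comp_def)

lemma pderiv_Ph:
  fixes H :: "'n::finite phase \<Rightarrow> complex"
  assumes sm: "lsmooth H"
  shows "pderiv_mi b (\<lambda>g. Ph l c0 g * H g) g =
    Ph l c0 g * (\<Sum>c\<in>{c. mi_le c b}. of_nat (mi_binom b c) * Lpow l c * pderiv_mi (mi_sub b c) H g)"
proof -
  have "pderiv_mi b (\<lambda>g. Ph l c0 g * H g) = iter_dderiv (blocks dirf keys (nb b)) (\<lambda>g. Ph l c0 g * H g)"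
    unfolding pderiv_mi_def blocks_phase_dirs0 ..
  also have "\<dots> = (\<lambda>g. Ph l c0 g * (\<Sum>c\<in>CS keys (nb b). (\<Prod>k\<in>set keys. of_nat (nb b k choose c k) * Lv l (dirf k) ^ c k) * iter_dderiv (blocks dirf keys (\<lambda>k. nb b k - c k)) H g))"
    by (rule iter_blocks[OF sm]) (simp add: keys_prop)
  finally have e: "pderiv_mi b (\<lambda>g. Ph l c0 g * H g) g = Ph l c0 g * (\<Sum>c\<in>CS keys (nb b). (\<Prod>k\<in>set keys. of_nat (nb b k choose c k) * Lv l (dirf k) ^ c k) * iter_dderiv (blocks dirf keys (\<lambda>k. nb b k - c k)) H g)"
    by simp
  have "(\<Sum>c\<in>CS keys (nb b). (\<Prod>k\<in>set keys. of_nat (nb b k choose c k) * Lv l (dirf k) ^ c k) * iter_dderiv (blocks dirf keys (\<lambda>k. nb b k - c k)) H g)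
     = (\<Sum>c\<in>{c. mi_le c b}. of_nat (mi_binom b c) * Lpow l c * pderiv_mi (mi_sub b c) H g)"
  proof (rule sum.reindex_bij_witness[where j="\<lambda>c. (c \<circ> Inl, c \<circ> Inr)" and i="\<lambda>c. case_sum (fst c) (snd c)"])
    fix c assume c: "c \<in> CS keys (nb b)"
    show "case_sum (fst (c \<circ> Inl, c \<circ> Inr)) (snd (c \<circ> Inl, c \<circ> Inr)) = c"
      by (auto simp: fun_eq_iff split: sum.split)
    have h: "c k \<le> nb b k" for k using c unfolding CS_def by auto
    have h1: "c (Inl i) \<le> fst b i" for i using h[of "Inl i"] by (simp add: nb_def)
    have h2: "c (Inr i) \<le> snd b i" for i using h[of "Inr i"] by (simp add: nb_def)
    show "(c \<circ> Inl, c \<circ> Inr) \<in> {c. mi_le c b}" using h1 h2 unfolding mi_le_def by auto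
    have "(\<Prod>k\<in>set keys. of_nat (nb b k choose c k) * Lv l (dirf k) ^ c k)
        = (\<Prod>i\<in>UNIV. of_nat (fst b i choose c (Inl i)) * Lv l (axis i 1, 0) ^ c (Inl i)) *
          (\<Prod>i\<in>UNIV. of_nat (snd b i choose c (Inr i)) * Lv l (0, axis i 1) ^ c (Inr i))"
      unfolding keys_prop[THEN conjunct2] prod_UNIV_sum by (simp add: nb_def dirf_def)
    also have "\<dots> = of_nat (mi_binom b (c \<circ> Inl, c \<circ> Inr)) * Lpow l (c \<circ> Inl, c \<circ> Inr)"
      unfolding mi_binom_def Lpow_def by (simp add: prod.distrib of_nat_prod algebra_simps)
    finally show "of_nat (mi_binom b (c \<circ> Inl, c \<circ> Inr)) * Lpow l (c \<circ> Inl, c \<circ> Inr) * pderiv_mi (mi_sub b (c \<circ> Inl, c \<circ> Inr)) H g =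
        (\<Prod>k\<in>set keys. of_nat (nb b k choose c k) * Lv l (dirf k) ^ c k) * iter_dderiv (blocks dirf keys (\<lambda>k. nb b k - c k)) H g"
      unfolding blocks_phase_dirs pderiv_mi_def by simp
  next
    fix c assume c: "c \<in> {c. mi_le c b}"
    show "(case_sum (fst c) (snd c) \<circ> Inl, case_sum (fst c) (snd c) \<circ> Inr) = c" by (cases c) (simp add: comp_def)
    show "case_sum (fst c) (snd c) \<in> CS keys (nb b)"
      using c keys_prop unfolding CS_def mi_le_def nb_def by (auto split: sum.split)
  qed
  with e show ?thesis by simp
qed

definition ellf :: "'n::finite phase \<Rightarrow> 'n phase \<Rightarrow> 'n phase" where
  "ellf \<alpha> \<beta> = (snd \<alpha> - snd \<beta>, fst \<beta> - fst \<alpha>)"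

definition cf :: "'n::finite phase \<Rightarrow> 'n phase \<Rightarrow> real" where
  "cf \<alpha> \<beta> = (fst \<alpha> \<bullet> snd \<beta> - fst \<beta> \<bullet> snd \<alpha>) / 2"

lemma phase_identity:
  fixes x p ax ap bx bp z :: "real^'n::finite"
  shows "p \<bullet> ((bx - ax) + z) + (x - (1/2) *\<^sub>R ((bx - ax) + z) - (1/2) *\<^sub>R ax) \<bullet> ap
        - (x + (1/2) *\<^sub>R ((bx - ax) + z) - (1/2) *\<^sub>R bx) \<bullet> bp
      = ((ap - bp) \<bullet> x + (bx - ax) \<bullet> p) + (ax \<bullet> bp - bx \<bullet> ap) / 2 + (p - (1/2) *\<^sub>R (ap + bp)) \<bullet> z"
  by (simp add: inner_simps inner_commute algebra_simps) (simp add: field_simps)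

lemma arg_identity1:
  fixes x ax bx z :: "real^'n::finite"
  shows "x - (1/2) *\<^sub>R ((bx - ax) + z) - ax = (x - (1/2) *\<^sub>R (ax + bx)) - (1/2) *\<^sub>R z"
  by (simp add: vec_eq_iff algebra_simps)

lemma arg_identity2:
  fixes x ax bx z :: "real^'n::finite"
  shows "x + (1/2) *\<^sub>R ((bx - ax) + z) - bx = (x - (1/2) *\<^sub>R (ax + bx)) + (1/2) *\<^sub>R z"
  by (simp add: vec_eq_iff algebra_simps)

lemma exp3: "exp (\<i> * complex_of_real (a + b - c)) = exp (\<i> * complex_of_real a) * exp (\<i> * complex_of_real b) * cnj (exp (\<i> * complex_of_real c))"
proof -
  have "cnj (exp (\<i> * complex_of_real c)) = exp (- (\<i> * complex_of_real c))" by (simp add: exp_cnj)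
  moreover have "\<i> * complex_of_real (a + b - c) = \<i> * complex_of_real a + \<i> * complex_of_real b + - (\<i> * complex_of_real c)"
    by (simp add: algebra_simps)
  ultimately show ?thesis by (simp only: exp_add)
qed

lemma exp2: "exp (\<i> * complex_of_real (a + b)) = exp (\<i> * complex_of_real a) * exp (\<i> * complex_of_real b)"
  by (simp add: distrib_left exp_add)

context
  fixes chi :: "real^'n::finite \<Rightarrow> complex"
  assumes sch: "schwartz chi"
begin

lemma chi0_cont_aff: "continuous_on UNIV (\<lambda>y. chi (x + c *\<^sub>R y))"
  using chi_cont_aff[OF sch, of "[]" x c] by (simp add: iter_dderiv_Nil)

lemma wigner_trans:
  "wigner (rank_one (Dtrans \<alpha> chi) (Dtrans \<beta> chi)) g = Ph (ellf \<alpha> \<beta>) (cf \<alpha> \<beta>) g * wigner (rank_one chi chi) (g - (1/2) *\<^sub>R (\<alpha> + \<beta>))"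
proof -
  obtain x p where g: "g = (x, p)" by (cases g)
  obtain ax ap where a: "\<alpha> = (ax, ap)" by (cases \<alpha>)
  obtain bx bp where b: "\<beta> = (bx, bp)" by (cases \<beta>)
  define \<delta> where "\<delta> = bx - ax"
  define mx where "mx = x - (1/2) *\<^sub>R (ax + bx)"
  define mp where "mp = p - (1/2) *\<^sub>R (ap + bp)"
  have gm: "g - (1/2) *\<^sub>R (\<alpha> + \<beta>) = (mx, mp)" unfolding g a b mx_def mp_def by simp
  define f where "f y = exp (\<i> * complex_of_real (p \<bullet> y)) * rank_one (Dtrans \<alpha> chi) (Dtrans \<beta> chi) (x - (1/2) *\<^sub>R y) (x + (1/2) *\<^sub>R y)" for y
  define I where "I z = exp (\<i> * complex_of_real (mp \<bullet> z)) * rank_one chi chi (mx - (1/2) *\<^sub>R z) (mx + (1/2) *\<^sub>R z)" for z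
  have fcont: "continuous_on UNIV f"
  proof -
    have e: "f = (\<lambda>y. exp (\<i> * complex_of_real (p \<bullet> y)) *
       (exp (\<i> * complex_of_real ((x - (1/2) *\<^sub>R y - (1/2) *\<^sub>R ax) \<bullet> ap)) * chi ((x - ax) + (-1/2) *\<^sub>R y) *
        cnj (exp (\<i> * complex_of_real ((x + (1/2) *\<^sub>R y - (1/2) *\<^sub>R bx) \<bullet> bp)) * chi ((x - bx) + (1/2) *\<^sub>R y))))"
      unfolding f_def rank_one_def Dtrans_def a b by (intro ext) (simp add: algebra_simps)
    show ?thesis unfolding e by (intro continuous_intros chi0_cont_aff)
  qed
  have fm[measurable]: "f \<in> borel_measurable borel" by (rule borel_measurable_continuous_onI[OF fcont])
  have pt: "f (\<delta> + z) = Ph (ellf \<alpha> \<beta>) (cf \<alpha> \<beta>) g * I z" for z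
  proof -
    have ph: "p \<bullet> (\<delta> + z) + (x - (1/2) *\<^sub>R (\<delta> + z) - (1/2) *\<^sub>R ax) \<bullet> ap - (x + (1/2) *\<^sub>R (\<delta> + z) - (1/2) *\<^sub>R bx) \<bullet> bp
        = (ellf \<alpha> \<beta> \<bullet> g + cf \<alpha> \<beta>) + mp \<bullet> z"
      unfolding \<delta>_def mp_def ellf_def cf_def a b g using phase_identity[of p bx ax z x ap bp] by simp
    have a1: "x - (1/2) *\<^sub>R (\<delta> + z) - ax = mx - (1/2) *\<^sub>R z" unfolding \<delta>_def mx_def by (rule arg_identity1)
    have a2: "x + (1/2) *\<^sub>R (\<delta> + z) - bx = mx + (1/2) *\<^sub>R z" unfolding \<delta>_def mx_def by (rule arg_identity2)
    have "f (\<delta> + z) = (exp (\<i> * complex_of_real (p \<bullet> (\<delta> + z))) * exp (\<i> * complex_of_real ((x - (1/2) *\<^sub>R (\<delta> + z) - (1/2) *\<^sub>R ax) \<bullet> ap))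
        * cnj (exp (\<i> * complex_of_real ((x + (1/2) *\<^sub>R (\<delta> + z) - (1/2) *\<^sub>R bx) \<bullet> bp))))
        * (chi (mx - (1/2) *\<^sub>R z) * cnj (chi (mx + (1/2) *\<^sub>R z)))"
      unfolding f_def rank_one_def Dtrans_def a b a1[symmetric] a2[symmetric] by (simp add: ac_simps)
    also have "exp (\<i> * complex_of_real (p \<bullet> (\<delta> + z))) * exp (\<i> * complex_of_real ((x - (1/2) *\<^sub>R (\<delta> + z) - (1/2) *\<^sub>R ax) \<bullet> ap))
        * cnj (exp (\<i> * complex_of_real ((x + (1/2) *\<^sub>R (\<delta> + z) - (1/2) *\<^sub>R bx) \<bullet> bp)))
        = exp (\<i> * complex_of_real (ellf \<alpha> \<beta> \<bullet> g + cf \<alpha> \<beta>)) * exp (\<i> * complex_of_real (mp \<bullet> z))"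
      unfolding exp3[symmetric] ph exp2 ..
    finally show ?thesis unfolding I_def Ph_def rank_one_def by (simp add: ac_simps)
  qed
  have "(\<integral>y. f y \<partial>lborel) = (\<integral>y. f y \<partial>(distr lborel borel ((+) \<delta>)))" by (simp add: lborel_distr_plus)
  also have "\<dots> = (\<integral>z. f (\<delta> + z) \<partial>lborel)" by (rule integral_distr) auto
  also have "\<dots> = Ph (ellf \<alpha> \<beta>) (cf \<alpha> \<beta>) g * (\<integral>z. I z \<partial>lborel)" unfolding pt by simp
  finally have int: "(\<integral>y. f y \<partial>lborel) = Ph (ellf \<alpha> \<beta>) (cf \<alpha> \<beta>) g * (\<integral>z. I z \<partial>lborel)" .
  show ?thesis unfolding wigner_def gm using int unfolding f_def I_def g by simp
qed

end

lemma mi_le_set: "{d. mi_le d a} = PiE (UNIV::'n::finite set) (\<lambda>i. {..fst a i}) \<times> PiE UNIV (\<lambda>i. {..snd a i})"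
  unfolding mi_le_def PiE_UNIV_domain by auto

lemma finite_mi_le: "finite {d. mi_le d (a :: 'n::finite midx)}"
  unfolding mi_le_set by (intro finite_cartesian_product finite_PiE) auto

lemma binom_prod:
  fixes u w :: "'n::finite \<Rightarrow> real"
  shows "(\<Prod>i\<in>UNIV. (u i + w i) ^ n i) = (\<Sum>d\<in>PiE UNIV (\<lambda>i. {..n i}). (\<Prod>i\<in>UNIV. real (n i choose d i) * u i ^ (n i - d i) * w i ^ d i))"
proof -
  have "(\<Prod>i\<in>UNIV. (u i + w i) ^ n i) = (\<Prod>i\<in>UNIV. \<Sum>k\<le>n i. real (n i choose k) * u i ^ (n i - k) * w i ^ k)"
    by (intro prod.cong refl) (subst add.commute, subst binomial_ring, simp add: ac_simps)
  also have "\<dots> = (\<Sum>d\<in>PiE UNIV (\<lambda>i. {..n i}). (\<Prod>i\<in>UNIV. real (n i choose d i) * u i ^ (n i - d i) * w i ^ d i))"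
    by (rule prod_sum_PiE) auto
  finally show ?thesis .
qed

lemma mi_binomial:
  fixes u w :: "'n::finite phase"
  shows "mi_pow (u + w) a = (\<Sum>d\<in>{d. mi_le d a}. real (mi_binom a d) * mi_pow u (mi_sub a d) * mi_pow w d)"
proof -
  have "mi_pow (u + w) a = (\<Prod>i\<in>UNIV. (fst u $ i + fst w $ i) ^ fst a i) * (\<Prod>i\<in>UNIV. (snd u $ i + snd w $ i) ^ snd a i)"
    unfolding mi_pow_def by simp
  also have "\<dots> = (\<Sum>dx\<in>PiE UNIV (\<lambda>i. {..fst a i}). (\<Prod>i\<in>UNIV. real (fst a i choose dx i) * (fst u $ i) ^ (fst a i - dx i) * (fst w $ i) ^ dx i))
                * (\<Sum>dp\<in>PiE UNIV (\<lambda>i. {..snd a i}). (\<Prod>i\<in>UNIV. real (snd a i choose dp i) * (snd u $ i) ^ (snd a i - dp i) * (snd w $ i) ^ dp i))"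
    by (simp only: binom_prod)
  also have "\<dots> = (\<Sum>d\<in>PiE UNIV (\<lambda>i. {..fst a i}) \<times> PiE UNIV (\<lambda>i. {..snd a i}).
        (\<Prod>i\<in>UNIV. real (fst a i choose fst d i) * (fst u $ i) ^ (fst a i - fst d i) * (fst w $ i) ^ fst d i) *
        (\<Prod>i\<in>UNIV. real (snd a i choose snd d i) * (snd u $ i) ^ (snd a i - snd d i) * (snd w $ i) ^ snd d i))"
    by (simp add: sum_product sum.cartesian_product case_prod_beta)
  also have "\<dots> = (\<Sum>d\<in>{d. mi_le d a}. real (mi_binom a d) * mi_pow u (mi_sub a d) * mi_pow w d)"
    unfolding mi_le_set
    by (intro sum.cong refl) (simp add: mi_binom_def mi_pow_def mi_sub_def prod.distrib of_nat_prod ac_simps)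
  finally show ?thesis .
qed

lemma mi_pow_add: "mi_pow g (mi_add r s) = mi_pow g r * mi_pow g s"
  unfolding mi_pow_def mi_add_def by (simp add: power_add prod.distrib ac_simps)

lemma mi_pow_scale: "mi_pow (c *\<^sub>R g) d = c ^ mi_abs d * mi_pow g d"
  unfolding mi_pow_def mi_abs_def by (simp add: power_mult_distrib prod.distrib power_add power_sum ac_simps)

lemma mi_pow_neg: "\<bar>mi_pow (- g) r\<bar> = \<bar>mi_pow g r\<bar>"
  unfolding mi_pow_def by (simp add: abs_mult abs_prod power_abs)

lemma mi_hat_hat[simp]: "mi_hat (mi_hat e) = e"
  unfolding mi_hat_def by simp

lemma mi_le_hat[simp]: "mi_le (mi_hat e) (mi_hat c) \<longleftrightarrow> mi_le e c"
  unfolding mi_hat_def mi_le_def by auto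

lemma mi_binom_hat: "mi_binom (mi_hat c) (mi_hat e) = mi_binom c e"
  unfolding mi_hat_def mi_binom_def by simp

lemma mi_sub_hat: "mi_sub (mi_hat c) (mi_hat e) = mi_hat (mi_sub c e)"
  unfolding mi_hat_def mi_sub_def by simp

lemma Lpow_norm: "cmod (Lpow (ellf \<alpha> \<beta>) c) = \<bar>mi_pow (\<alpha> - \<beta>) (mi_hat c)\<bar>"
proof -
  have "cmod (Lpow (ellf \<alpha> \<beta>) c) = (\<Prod>i\<in>UNIV. \<bar>snd \<alpha> $ i - snd \<beta> $ i\<bar> ^ fst c i) * (\<Prod>i\<in>UNIV. \<bar>fst \<beta> $ i - fst \<alpha> $ i\<bar> ^ snd c i)"
    unfolding Lpow_def Lv_def ellf_def
    by (simp add: norm_mult prod_norm[symmetric] norm_power cart_eq_inner_axis[symmetric] inner_Pair_0 norm_of_real del: of_real_diff)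
  also have "\<dots> = \<bar>mi_pow (\<alpha> - \<beta>) (mi_hat c)\<bar>"
    unfolding mi_pow_def mi_hat_def by (simp add: abs_mult abs_prod power_abs abs_minus_commute mult.commute)
  finally show ?thesis .
qed

lemma mi_le_hat2: "mi_le (mi_hat e) c \<longleftrightarrow> mi_le e (mi_hat c)"
  unfolding mi_hat_def mi_le_def by auto

lemma mi_binom_hat2: "mi_binom c (mi_hat e) = mi_binom (mi_hat c) e"
  unfolding mi_hat_def mi_binom_def by (simp add: mult.commute)

lemma Lpow_bound:
  "cmod (Lpow (ellf \<alpha> \<beta>) c) \<le> (\<Sum>e\<in>{e. mi_le e c}. real (mi_binom c e) * (\<bar>mi_pow \<alpha> (mi_hat e)\<bar> * \<bar>mi_pow \<beta> (mi_sub (mi_hat c) (mi_hat e))\<bar>))"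
proof -
  have "cmod (Lpow (ellf \<alpha> \<beta>) c) = \<bar>mi_pow ((- \<beta>) + \<alpha>) (mi_hat c)\<bar>" unfolding Lpow_norm by simp
  also have "\<dots> = \<bar>\<Sum>e'\<in>{e'. mi_le e' (mi_hat c)}. real (mi_binom (mi_hat c) e') * mi_pow (- \<beta>) (mi_sub (mi_hat c) e') * mi_pow \<alpha> e'\<bar>"
    unfolding mi_binomial ..
  also have "\<dots> \<le> (\<Sum>e'\<in>{e'. mi_le e' (mi_hat c)}. \<bar>real (mi_binom (mi_hat c) e') * mi_pow (- \<beta>) (mi_sub (mi_hat c) e') * mi_pow \<alpha> e'\<bar>)"
    by (rule sum_abs)
  also have "\<dots> = (\<Sum>e'\<in>{e'. mi_le e' (mi_hat c)}. real (mi_binom (mi_hat c) e') * (\<bar>mi_pow \<alpha> e'\<bar> * \<bar>mi_pow \<beta> (mi_sub (mi_hat c) e')\<bar>))"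
    by (simp add: abs_mult mi_pow_neg ac_simps)
  also have "\<dots> = (\<Sum>e\<in>{e. mi_le e c}. real (mi_binom c e) * (\<bar>mi_pow \<alpha> (mi_hat e)\<bar> * \<bar>mi_pow \<beta> (mi_sub (mi_hat c) (mi_hat e))\<bar>))"
    by (rule sum.reindex_bij_witness[where i=mi_hat and j=mi_hat]) (simp_all add: mi_binom_hat2 mi_le_hat2)
  finally show ?thesis .
qed

lemma mpow_bound:
  "\<bar>mi_pow ((1/2) *\<^sub>R (\<alpha> + \<beta>)) d\<bar> \<le> (1/2) ^ mi_abs d * (\<Sum>f\<in>{f. mi_le f d}. real (mi_binom d f) * (\<bar>mi_pow \<alpha> f\<bar> * \<bar>mi_pow \<beta> (mi_sub d f)\<bar>))"
proof -
  have "\<bar>mi_pow ((1/2) *\<^sub>R (\<alpha> + \<beta>)) d\<bar> = (1/2) ^ mi_abs d * \<bar>mi_pow (\<beta> + \<alpha>) d\<bar>"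
    unfolding mi_pow_scale by (simp add: abs_mult add.commute)
  also have "\<bar>mi_pow (\<beta> + \<alpha>) d\<bar> \<le> (\<Sum>f\<in>{f. mi_le f d}. \<bar>real (mi_binom d f) * mi_pow \<beta> (mi_sub d f) * mi_pow \<alpha> f\<bar>)"
    unfolding mi_binomial by (rule sum_abs)
  also have "\<dots> = (\<Sum>f\<in>{f. mi_le f d}. real (mi_binom d f) * (\<bar>mi_pow \<alpha> f\<bar> * \<bar>mi_pow \<beta> (mi_sub d f)\<bar>))"
    by (simp add: abs_mult ac_simps)
  finally show ?thesis by simp
qed

lemma Ph_norm[simp]: "cmod (Ph l c0 g) = 1"
  unfolding Ph_def by simp

context
  fixes chi :: "real^'n::finite \<Rightarrow> complex"
  assumes sch: "schwartz chi"
begin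

lemma pderiv_WAB:
  "pderiv_mi b (wigner (rank_one (Dtrans \<alpha> chi) (Dtrans \<beta> chi))) \<gamma> = Ph (ellf \<alpha> \<beta>) (cf \<alpha> \<beta>) \<gamma> *
     (\<Sum>c\<in>{c. mi_le c b}. of_nat (mi_binom b c) * Lpow (ellf \<alpha> \<beta>) c * pderiv_mi (mi_sub b c) (wigner (rank_one chi chi)) (\<gamma> - (1/2) *\<^sub>R (\<alpha> + \<beta>)))"
proof -
  let ?W = "wigner (rank_one chi chi)"
  let ?m = "(1/2) *\<^sub>R (\<alpha> + \<beta>)"
  have e: "wigner (rank_one (Dtrans \<alpha> chi) (Dtrans \<beta> chi)) = (\<lambda>g. Ph (ellf \<alpha> \<beta>) (cf \<alpha> \<beta>) g * (\<lambda>g. ?W (g - ?m)) g)"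
    by (intro ext wigner_trans[OF sch])
  have sm: "lsmooth (\<lambda>g. ?W (g - ?m))" by (intro lsmooth_shift wigner_lsmooth[OF sch])
  show ?thesis unfolding e pderiv_Ph[OF sm] unfolding pderiv_mi_def iter_shift ..
qed

lemma pointwise_real:
  fixes \<alpha> \<beta> \<gamma> :: "'n phase" and a b :: "'n midx"
  defines "m \<equiv> (1/2) *\<^sub>R (\<alpha> + \<beta>)"
  defines "Z \<equiv> \<lambda>c d. cmod (complex_of_real (mi_pow (\<gamma> - m) (mi_sub a d)) * pderiv_mi (mi_sub b c) (wigner (rank_one chi chi)) (\<gamma> - m))"
  shows "cmod (complex_of_real (mi_pow \<gamma> a) * pderiv_mi b (wigner (rank_one (Dtrans \<alpha> chi) (Dtrans \<beta> chi))) \<gamma>)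
    \<le> (\<Sum>c\<in>{c. mi_le c b}. \<Sum>d\<in>{d. mi_le d a}. \<Sum>e\<in>{e. mi_le e c}. \<Sum>f\<in>{f. mi_le f d}.
           real (mi_binom b c * mi_binom a d * mi_binom c e * mi_binom d f) * (1 / 2 ^ mi_abs d)
           * \<bar>mi_pow \<alpha> (mi_add (mi_hat e) f) * mi_pow \<beta> (mi_add (mi_sub (mi_hat c) (mi_hat e)) (mi_sub d f))\<bar> * Z c d)"
proof -
  let ?W = "wigner (rank_one chi chi)"
  define Y where "Y c = pderiv_mi (mi_sub b c) ?W (\<gamma> - m)" for c
  define Ac where "Ac c = (\<Sum>e\<in>{e. mi_le e c}. real (mi_binom c e) * (\<bar>mi_pow \<alpha> (mi_hat e)\<bar> * \<bar>mi_pow \<beta> (mi_sub (mi_hat c) (mi_hat e))\<bar>))" for c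
  define Md where "Md d = (1/2) ^ mi_abs d * (\<Sum>f\<in>{f. mi_le f d}. real (mi_binom d f) * (\<bar>mi_pow \<alpha> f\<bar> * \<bar>mi_pow \<beta> (mi_sub d f)\<bar>))" for d
  have Ac0: "0 \<le> Ac c" for c unfolding Ac_def by (intro sum_nonneg mult_nonneg_nonneg) auto
  have Md0: "0 \<le> Md d" for d unfolding Md_def by (intro sum_nonneg mult_nonneg_nonneg) auto
  have ZY: "Z c d = \<bar>mi_pow (\<gamma> - m) (mi_sub a d)\<bar> * cmod (Y c)" for c d
    unfolding Z_def Y_def by (simp add: norm_mult)
  have ga: "\<bar>mi_pow \<gamma> a\<bar> \<le> (\<Sum>d\<in>{d. mi_le d a}. real (mi_binom a d) * \<bar>mi_pow (\<gamma> - m) (mi_sub a d)\<bar> * Md d)"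
  proof -
    have "\<bar>mi_pow \<gamma> a\<bar> = \<bar>mi_pow ((\<gamma> - m) + m) a\<bar>" by simp
    also have "\<dots> \<le> (\<Sum>d\<in>{d. mi_le d a}. \<bar>real (mi_binom a d) * mi_pow (\<gamma> - m) (mi_sub a d) * mi_pow m d\<bar>)"
      unfolding mi_binomial by (rule sum_abs)
    also have "\<dots> \<le> (\<Sum>d\<in>{d. mi_le d a}. real (mi_binom a d) * \<bar>mi_pow (\<gamma> - m) (mi_sub a d)\<bar> * Md d)"
      unfolding abs_mult Md_def m_def
    proof (rule sum_mono)
      fix d
      show "\<bar>real (mi_binom a d)\<bar> * \<bar>mi_pow (\<gamma> - (1 / 2) *\<^sub>R (\<alpha> + \<beta>)) (mi_sub a d)\<bar> * \<bar>mi_pow ((1 / 2) *\<^sub>R (\<alpha> + \<beta>)) d\<bar>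
         \<le> real (mi_binom a d) * \<bar>mi_pow (\<gamma> - (1 / 2) *\<^sub>R (\<alpha> + \<beta>)) (mi_sub a d)\<bar> *
          ((1 / 2) ^ mi_abs d * (\<Sum>f | mi_le f d. real (mi_binom d f) * (\<bar>mi_pow \<alpha> f\<bar> * \<bar>mi_pow \<beta> (mi_sub d f)\<bar>)))"
        using mult_left_mono[OF mpow_bound[of \<alpha> \<beta> d], of "real (mi_binom a d) * \<bar>mi_pow (\<gamma> - (1 / 2) *\<^sub>R (\<alpha> + \<beta>)) (mi_sub a d)\<bar>"]
        by simp
    qed
    finally show ?thesis .
  qed
  have sc: "cmod (\<Sum>c\<in>{c. mi_le c b}. of_nat (mi_binom b c) * Lpow (ellf \<alpha> \<beta>) c * Y c) \<le> (\<Sum>c\<in>{c. mi_le c b}. real (mi_binom b c) * Ac c * cmod (Y c))"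
  proof -
    have "cmod (\<Sum>c\<in>{c. mi_le c b}. of_nat (mi_binom b c) * Lpow (ellf \<alpha> \<beta>) c * Y c) \<le> (\<Sum>c\<in>{c. mi_le c b}. cmod (of_nat (mi_binom b c) * Lpow (ellf \<alpha> \<beta>) c * Y c))"
      by (rule norm_sum)
    also have "\<dots> \<le> (\<Sum>c\<in>{c. mi_le c b}. real (mi_binom b c) * Ac c * cmod (Y c))"
    proof (rule sum_mono)
      fix c
      have "real (mi_binom b c) * cmod (Lpow (ellf \<alpha> \<beta>) c) \<le> real (mi_binom b c) * Ac c"
        using mult_left_mono[OF Lpow_bound[of \<alpha> \<beta> c], of "real (mi_binom b c)"] by (simp add: Ac_def)
      then show "cmod (of_nat (mi_binom b c) * Lpow (ellf \<alpha> \<beta>) c * Y c) \<le> real (mi_binom b c) * Ac c * cmod (Y c)"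
        unfolding norm_mult by (simp add: mult_right_mono)
    qed
    finally show ?thesis .
  qed
  have "cmod (complex_of_real (mi_pow \<gamma> a) * pderiv_mi b (wigner (rank_one (Dtrans \<alpha> chi) (Dtrans \<beta> chi))) \<gamma>)
      = \<bar>mi_pow \<gamma> a\<bar> * cmod (\<Sum>c\<in>{c. mi_le c b}. of_nat (mi_binom b c) * Lpow (ellf \<alpha> \<beta>) c * Y c)"
    unfolding pderiv_WAB Y_def m_def by (simp add: norm_mult)
  also have "\<dots> \<le> (\<Sum>d\<in>{d. mi_le d a}. real (mi_binom a d) * \<bar>mi_pow (\<gamma> - m) (mi_sub a d)\<bar> * Md d) * (\<Sum>c\<in>{c. mi_le c b}. real (mi_binom b c) * Ac c * cmod (Y c))"
    by (intro mult_mono ga sc) (auto intro!: sum_nonneg mult_nonneg_nonneg Md0 Ac0)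
  also have "\<dots> = (\<Sum>c\<in>{c. mi_le c b}. \<Sum>d\<in>{d. mi_le d a}. (real (mi_binom b c) * real (mi_binom a d)) * (Ac c * Md d) * Z c d)"
    unfolding ZY by (simp add: sum_product sum.swap[of _ "{d. mi_le d a}"] ac_simps)
  also have "\<dots> = (\<Sum>c\<in>{c. mi_le c b}. \<Sum>d\<in>{d. mi_le d a}. \<Sum>e\<in>{e. mi_le e c}. \<Sum>f\<in>{f. mi_le f d}.
           real (mi_binom b c * mi_binom a d * mi_binom c e * mi_binom d f) * (1 / 2 ^ mi_abs d)
           * \<bar>mi_pow \<alpha> (mi_add (mi_hat e) f) * mi_pow \<beta> (mi_add (mi_sub (mi_hat c) (mi_hat e)) (mi_sub d f))\<bar> * Z c d)"
  proof (intro sum.cong refl)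
    fix c d
    have "Ac c * Md d = (\<Sum>e\<in>{e. mi_le e c}. \<Sum>f\<in>{f. mi_le f d}. (real (mi_binom c e) * (\<bar>mi_pow \<alpha> (mi_hat e)\<bar> * \<bar>mi_pow \<beta> (mi_sub (mi_hat c) (mi_hat e))\<bar>))
         * ((1/2) ^ mi_abs d * (real (mi_binom d f) * (\<bar>mi_pow \<alpha> f\<bar> * \<bar>mi_pow \<beta> (mi_sub d f)\<bar>))))"
      unfolding Ac_def Md_def by (simp add: sum_distrib_left sum_distrib_right mult.assoc) (rule sum.swap)
    then show "(real (mi_binom b c) * real (mi_binom a d)) * (Ac c * Md d) * Z c d =
      (\<Sum>e\<in>{e. mi_le e c}. \<Sum>f\<in>{f. mi_le f d}.
           real (mi_binom b c * mi_binom a d * mi_binom c e * mi_binom d f) * (1 / 2 ^ mi_abs d)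
           * \<bar>mi_pow \<alpha> (mi_add (mi_hat e) f) * mi_pow \<beta> (mi_add (mi_sub (mi_hat c) (mi_hat e)) (mi_sub d f))\<bar> * Z c d)"
      by (simp add: sum_distrib_left sum_distrib_right mi_pow_add abs_mult power_one_over ac_simps)
  qed
  finally show ?thesis .
qed

end

lemma mi_abs_add: "mi_abs (mi_add r s) = mi_abs r + mi_abs s"
  unfolding mi_abs_def mi_add_def by (simp add: sum.distrib)

lemma mi_abs_sub: assumes h: "mi_le s r" shows "mi_abs (mi_sub r s) + mi_abs s = mi_abs r"
proof -
  have 1: "(\<Sum>i\<in>UNIV. fst r i - fst s i) + (\<Sum>i\<in>UNIV. fst s i) = (\<Sum>i\<in>UNIV. fst r i)"
    using h unfolding mi_le_def by (simp add: sum.distrib[symmetric])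
  have 2: "(\<Sum>i\<in>UNIV. snd r i - snd s i) + (\<Sum>i\<in>UNIV. snd s i) = (\<Sum>i\<in>UNIV. snd r i)"
    using h unfolding mi_le_def by (simp add: sum.distrib[symmetric])
  show ?thesis unfolding mi_abs_def mi_sub_def using 1 2 by simp
qed

lemma mi_abs_hat: "mi_abs (mi_hat r) = mi_abs r"
  unfolding mi_abs_def mi_hat_def by simp

lemma mi_abs_mono: "mi_le s r \<Longrightarrow> mi_abs s \<le> mi_abs r"
  unfolding mi_abs_def mi_le_def by (intro add_mono sum_mono) auto

lemma mi_pow_abs_le:
  fixes g :: "'n::finite phase"
  assumes "norm g \<le> R"
  shows "\<bar>mi_pow g r\<bar> \<le> R ^ mi_abs r"
proof -
  have R0: "0 \<le> R" using assms norm_ge_zero order_trans by blast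
  have c1: "\<bar>fst g $ i\<bar> \<le> R" for i using component_le_norm_cart[of "fst g" i] norm_fst_le[of "fst g" "snd g"] assms by simp
  have c2: "\<bar>snd g $ i\<bar> \<le> R" for i using component_le_norm_cart[of "snd g" i] norm_snd_le[of "snd g" "fst g"] assms by simp
  have "\<bar>mi_pow g r\<bar> = (\<Prod>i\<in>UNIV. \<bar>fst g $ i\<bar> ^ fst r i) * (\<Prod>i\<in>UNIV. \<bar>snd g $ i\<bar> ^ snd r i)"
    unfolding mi_pow_def by (simp add: abs_mult abs_prod power_abs)
  also have "\<dots> \<le> (\<Prod>i\<in>UNIV. R ^ fst r i) * (\<Prod>i\<in>UNIV. R ^ snd r i)"
    by (intro mult_mono prod_mono conjI power_mono c1 c2) (auto intro!: prod_nonneg simp: R0)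
  also have "\<dots> = R ^ mi_abs r" unfolding mi_abs_def by (simp add: power_add power_sum)
  finally show ?thesis .
qed

definition ones :: "'n::finite phase" where "ones = ((\<chi> i. 1), (\<chi> i. 1))"

lemma mi_pow_ones: "mi_pow ones d = 1"
  unfolding mi_pow_def ones_def by simp

lemma sum_binom: "(\<Sum>e\<in>{e. mi_le e c}. real (mi_binom c e)) = 2 ^ mi_abs c"
proof -
  have "mi_pow (ones + ones) c = 2 ^ mi_abs c"
  proof -
    have "ones + ones = (2::real) *\<^sub>R (ones :: 'a phase)" by (simp add: scaleR_2)
    then show ?thesis by (simp add: mi_pow_scale mi_pow_ones)
  qed
  then show ?thesis unfolding mi_binomial by (simp add: mi_pow_ones)
qed

lemma binom_le: "mi_le e c \<Longrightarrow> real (mi_binom c e) \<le> 2 ^ mi_abs c"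
  unfolding sum_binom[symmetric] by (rule member_le_sum) (auto simp: finite_mi_le)

lemma coef_bound:
  fixes \<alpha> \<beta> :: "'n::finite phase"
  assumes cb: "mi_le c b" and da: "mi_le d a"
  defines "R \<equiv> 1 + norm \<alpha> + norm \<beta>"
  shows "(\<Sum>e\<in>{e. mi_le e c}. \<Sum>f\<in>{f. mi_le f d}.
           real (mi_binom b c * mi_binom a d * mi_binom c e * mi_binom d f) * (1 / 2 ^ mi_abs d)
           * \<bar>mi_pow \<alpha> (mi_add (mi_hat e) f) * mi_pow \<beta> (mi_add (mi_sub (mi_hat c) (mi_hat e)) (mi_sub d f))\<bar>)
     \<le> 4 ^ (mi_abs a + mi_abs b) * R ^ (mi_abs a + mi_abs b)"
proof -
  have R1: "1 \<le> R" unfolding R_def by simp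
  have P: "\<bar>mi_pow \<alpha> (mi_add (mi_hat e) f) * mi_pow \<beta> (mi_add (mi_sub (mi_hat c) (mi_hat e)) (mi_sub d f))\<bar> \<le> R ^ (mi_abs a + mi_abs b)"
    if e: "mi_le e c" and f: "mi_le f d" for e f
  proof -
    have "\<bar>mi_pow \<alpha> (mi_add (mi_hat e) f) * mi_pow \<beta> (mi_add (mi_sub (mi_hat c) (mi_hat e)) (mi_sub d f))\<bar>
        \<le> R ^ mi_abs (mi_add (mi_hat e) f) * R ^ mi_abs (mi_add (mi_sub (mi_hat c) (mi_hat e)) (mi_sub d f))"
      unfolding abs_mult by (intro mult_mono mi_pow_abs_le) (auto simp: R_def)
    also have "\<dots> = R ^ (mi_abs c + mi_abs d)"
    proof -
      have "mi_abs (mi_sub c e) + mi_abs e = mi_abs c" by (rule mi_abs_sub[OF e])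
      moreover have "mi_abs (mi_sub d f) + mi_abs f = mi_abs d" by (rule mi_abs_sub[OF f])
      ultimately have "mi_abs (mi_add (mi_hat e) f) + mi_abs (mi_add (mi_sub (mi_hat c) (mi_hat e)) (mi_sub d f)) = mi_abs c + mi_abs d"
        unfolding mi_abs_add mi_sub_hat mi_abs_hat by simp
      then show ?thesis by (simp add: power_add[symmetric])
    qed
    also have "\<dots> \<le> R ^ (mi_abs a + mi_abs b)"
      using mi_abs_mono[OF cb] mi_abs_mono[OF da] by (intro power_increasing R1) auto
    finally show ?thesis .
  qed
  have "(\<Sum>e\<in>{e. mi_le e c}. \<Sum>f\<in>{f. mi_le f d}.
           real (mi_binom b c * mi_binom a d * mi_binom c e * mi_binom d f) * (1 / 2 ^ mi_abs d)
           * \<bar>mi_pow \<alpha> (mi_add (mi_hat e) f) * mi_pow \<beta> (mi_add (mi_sub (mi_hat c) (mi_hat e)) (mi_sub d f))\<bar>)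
     \<le> (\<Sum>e\<in>{e. mi_le e c}. \<Sum>f\<in>{f. mi_le f d}.
           real (mi_binom b c * mi_binom a d * mi_binom c e * mi_binom d f) * (1 / 2 ^ mi_abs d) * R ^ (mi_abs a + mi_abs b))"
    by (intro sum_mono mult_left_mono P) auto
  also have "\<dots> = real (mi_binom b c) * real (mi_binom a d) * (1 / 2 ^ mi_abs d) * R ^ (mi_abs a + mi_abs b)
       * (\<Sum>e\<in>{e. mi_le e c}. real (mi_binom c e)) * (\<Sum>f\<in>{f. mi_le f d}. real (mi_binom d f))"
    by (simp add: sum_distrib_left sum_distrib_right sum_product sum_divide_distrib ac_simps)
  also have "\<dots> = real (mi_binom b c) * real (mi_binom a d) * R ^ (mi_abs a + mi_abs b) * 2 ^ mi_abs c"
    unfolding sum_binom by simp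
  also have "\<dots> \<le> 2 ^ mi_abs b * 2 ^ mi_abs a * R ^ (mi_abs a + mi_abs b) * 2 ^ mi_abs b"
    using R1 mi_abs_mono[OF cb]
    by (intro mult_mono binom_le cb da power_increasing) auto
  also have "\<dots> \<le> 4 ^ (mi_abs a + mi_abs b) * R ^ (mi_abs a + mi_abs b)"
  proof -
    have "(2::real) ^ mi_abs b * 2 ^ mi_abs a * 2 ^ mi_abs b \<le> 4 ^ (mi_abs a + mi_abs b)"
    proof -
      have "(2::real) ^ mi_abs b * 2 ^ mi_abs a * 2 ^ mi_abs b \<le> 2 ^ mi_abs a * 2 ^ mi_abs a * (2 ^ mi_abs b * 2 ^ mi_abs b)"
        by (simp add: ac_simps)
      also have "\<dots> = 4 ^ (mi_abs a + mi_abs b)"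
        by (simp add: power_add power_mult_distrib[symmetric])
      finally show ?thesis .
    qed
    then show ?thesis using R1 by (simp add: mult_right_mono ac_simps)
  qed
  finally show ?thesis .
qed

lemma mi_sub_inv: "mi_le d a \<Longrightarrow> mi_sub a (mi_sub a d) = d"
  unfolding mi_le_def mi_sub_def by (cases d) (auto simp: fun_eq_iff)

lemma mi_le_sub: "mi_le (mi_sub a d) a"
  unfolding mi_le_def mi_sub_def by auto

lemma sum_reflect: "(\<Sum>d\<in>{d. mi_le d a}. F (mi_sub a d)) = (\<Sum>d\<in>{d. mi_le d a}. F d)"
  by (rule sum.reindex_bij_witness[where i="mi_sub a" and j="mi_sub a"]) (auto simp: mi_sub_inv mi_le_sub)

lemma term_le:
  assumes "0 \<le> x" "0 \<le> P" "0 \<le> Z" "ennreal Z \<le> S"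
  shows "ennreal (real N * x * P * Z) \<le> of_nat N * ennreal x * S * ennreal P"
proof -
  have "ennreal (real N * x * P * Z) = (of_nat N * ennreal x * ennreal P) * ennreal Z"
    using assms by (simp add: ennreal_mult ennreal_of_nat_eq_real_of_nat mult.assoc)
  also have "\<dots> \<le> (of_nat N * ennreal x * ennreal P) * S" by (rule mult_left_mono) (use assms in auto)
  finally show ?thesis by (simp add: ac_simps)
qed

lemma term_eq:
  assumes "0 \<le> x" "0 \<le> P"
  shows "of_nat N * ennreal x * S * ennreal P = ennreal (real N * x * P) * S"
  using assms by (simp add: ennreal_mult ennreal_of_nat_eq_real_of_nat ac_simps)

theorem lemma12:
  fixes chi :: "real^'n::finite \<Rightarrow> complex"
  assumes "schwartz chi"
    and "(LINT x|lborel. (cmod (chi x))\<^sup>2) = 1"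
  shows "\<forall>(\<alpha>::'n phase) (\<beta>::'n phase) (a::'n midx) (b::'n midx).
    seminorm (wigner (rank_one (Dtrans \<alpha> chi) (Dtrans \<beta> chi))) a b
      \<le> (\<Sum>c\<in>{c. mi_le c b}. \<Sum>d\<in>{d. mi_le d a}. \<Sum>e\<in>{e. mi_le e c}. \<Sum>f\<in>{f. mi_le f d}.
           of_nat (mi_binom b c * mi_binom a d * mi_binom c e * mi_binom d f)
           * ennreal (1 / 2 ^ mi_abs d)
           * seminorm (wigner (rank_one chi chi)) (mi_sub a d) (mi_sub b c)
           * ennreal \<bar>mi_pow \<alpha> (mi_add (mi_hat e) f)
                     * mi_pow \<beta> (mi_add (mi_sub (mi_hat c) (mi_hat e)) (mi_sub d f))\<bar>)
    \<and> seminorm (wigner (rank_one (Dtrans \<alpha> chi) (Dtrans \<beta> chi))) a b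
      \<le> ennreal (4 ^ (mi_abs a + mi_abs b) * (1 + norm \<alpha> + norm \<beta>) ^ (mi_abs a + mi_abs b))
         * seminorm_sum (wigner (rank_one chi chi)) a b"
proof (intro allI)
  fix \<alpha> \<beta> :: "'n phase" and a b :: "'n midx"
  have sch: "schwartz chi" by fact
  let ?WAB = "wigner (rank_one (Dtrans \<alpha> chi) (Dtrans \<beta> chi))"
  let ?W = "wigner (rank_one chi chi)"
  define coef where "coef c d e f = real (mi_binom b c * mi_binom a d * mi_binom c e * mi_binom d f) * (1 / 2 ^ mi_abs d)
           * \<bar>mi_pow \<alpha> (mi_add (mi_hat e) f) * mi_pow \<beta> (mi_add (mi_sub (mi_hat c) (mi_hat e)) (mi_sub d f))\<bar>" for c d e f
  define RHS1 where "RHS1 = (\<Sum>c\<in>{c. mi_le c b}. \<Sum>d\<in>{d. mi_le d a}. \<Sum>e\<in>{e. mi_le e c}. \<Sum>f\<in>{f. mi_le f d}.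
           of_nat (mi_binom b c * mi_binom a d * mi_binom c e * mi_binom d f)
           * ennreal (1 / 2 ^ mi_abs d)
           * seminorm ?W (mi_sub a d) (mi_sub b c)
           * ennreal \<bar>mi_pow \<alpha> (mi_add (mi_hat e) f)
                     * mi_pow \<beta> (mi_add (mi_sub (mi_hat c) (mi_hat e)) (mi_sub d f))\<bar>)"
  have coef0: "0 \<le> coef c d e f" for c d e f unfolding coef_def by simp
  have first: "seminorm ?WAB a b \<le> RHS1"
    unfolding seminorm_def[of ?WAB]
  proof (rule SUP_least)
    fix \<gamma> :: "'n phase"
    define m where "m = (1/2) *\<^sub>R (\<alpha> + \<beta>)"
    define Z where "Z c d = cmod (complex_of_real (mi_pow (\<gamma> - m) (mi_sub a d)) * pderiv_mi (mi_sub b c) ?W (\<gamma> - m))" for c d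
    have ZS: "ennreal (Z c d) \<le> seminorm ?W (mi_sub a d) (mi_sub b c)" for c d
      unfolding seminorm_def Z_def by (rule SUP_upper) simp
    have "ennreal (cmod (complex_of_real (mi_pow \<gamma> a) * pderiv_mi b ?WAB \<gamma>))
        \<le> ennreal (\<Sum>c\<in>{c. mi_le c b}. \<Sum>d\<in>{d. mi_le d a}. \<Sum>e\<in>{e. mi_le e c}. \<Sum>f\<in>{f. mi_le f d}. coef c d e f * Z c d)"
      by (rule ennreal_leI) (use pointwise_real[OF sch, where \<gamma>=\<gamma> and a=a and b=b and \<alpha>=\<alpha> and \<beta>=\<beta>] in \<open>simp add: coef_def Z_def m_def\<close>)
    also have "\<dots> = (\<Sum>c\<in>{c. mi_le c b}. \<Sum>d\<in>{d. mi_le d a}. \<Sum>e\<in>{e. mi_le e c}. \<Sum>f\<in>{f. mi_le f d}. ennreal (coef c d e f * Z c d))"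
      by (simp add: sum_nonneg coef0 Z_def)
    also have "\<dots> \<le> RHS1"
      unfolding RHS1_def
    proof (intro sum_mono)
      fix c d e f
      show "ennreal (coef c d e f * Z c d) \<le> of_nat (mi_binom b c * mi_binom a d * mi_binom c e * mi_binom d f)
           * ennreal (1 / 2 ^ mi_abs d) * seminorm ?W (mi_sub a d) (mi_sub b c)
           * ennreal \<bar>mi_pow \<alpha> (mi_add (mi_hat e) f) * mi_pow \<beta> (mi_add (mi_sub (mi_hat c) (mi_hat e)) (mi_sub d f))\<bar>"
        unfolding coef_def by (rule term_le) (auto simp: Z_def ZS[unfolded Z_def])
    qed
    finally show "ennreal (cmod (complex_of_real (mi_pow \<gamma> a) * pderiv_mi b ?WAB \<gamma>)) \<le> RHS1" .
  qed
  define K where "K = 4 ^ (mi_abs a + mi_abs b) * (1 + norm \<alpha> + norm \<beta>) ^ (mi_abs a + mi_abs b)"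
  have second: "RHS1 \<le> ennreal K * seminorm_sum ?W a b"
  proof -
    have "RHS1 = (\<Sum>c\<in>{c. mi_le c b}. \<Sum>d\<in>{d. mi_le d a}. ennreal (\<Sum>e\<in>{e. mi_le e c}. \<Sum>f\<in>{f. mi_le f d}. coef c d e f) * seminorm ?W (mi_sub a d) (mi_sub b c))"
      unfolding RHS1_def
    proof (intro sum.cong refl)
      fix c d
      have "(\<Sum>e\<in>{e. mi_le e c}. \<Sum>f\<in>{f. mi_le f d}.
           of_nat (mi_binom b c * mi_binom a d * mi_binom c e * mi_binom d f)
           * ennreal (1 / 2 ^ mi_abs d) * seminorm ?W (mi_sub a d) (mi_sub b c)
           * ennreal \<bar>mi_pow \<alpha> (mi_add (mi_hat e) f) * mi_pow \<beta> (mi_add (mi_sub (mi_hat c) (mi_hat e)) (mi_sub d f))\<bar>)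
         = (\<Sum>e\<in>{e. mi_le e c}. \<Sum>f\<in>{f. mi_le f d}. ennreal (coef c d e f) * seminorm ?W (mi_sub a d) (mi_sub b c))"
        unfolding coef_def by (intro sum.cong refl term_eq) auto
      also have "\<dots> = (\<Sum>e\<in>{e. mi_le e c}. \<Sum>f\<in>{f. mi_le f d}. ennreal (coef c d e f)) * seminorm ?W (mi_sub a d) (mi_sub b c)"
        by (simp add: sum_distrib_right)
      also have "(\<Sum>e\<in>{e. mi_le e c}. \<Sum>f\<in>{f. mi_le f d}. ennreal (coef c d e f)) = ennreal (\<Sum>e\<in>{e. mi_le e c}. \<Sum>f\<in>{f. mi_le f d}. coef c d e f)"
        by (simp add: sum_nonneg coef0)
      finally show "(\<Sum>e\<in>{e. mi_le e c}. \<Sum>f\<in>{f. mi_le f d}.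
           of_nat (mi_binom b c * mi_binom a d * mi_binom c e * mi_binom d f)
           * ennreal (1 / 2 ^ mi_abs d) * seminorm ?W (mi_sub a d) (mi_sub b c)
           * ennreal \<bar>mi_pow \<alpha> (mi_add (mi_hat e) f) * mi_pow \<beta> (mi_add (mi_sub (mi_hat c) (mi_hat e)) (mi_sub d f))\<bar>)
         = ennreal (\<Sum>e\<in>{e. mi_le e c}. \<Sum>f\<in>{f. mi_le f d}. coef c d e f) * seminorm ?W (mi_sub a d) (mi_sub b c)" .
    qed
    also have "\<dots> \<le> (\<Sum>c\<in>{c. mi_le c b}. \<Sum>d\<in>{d. mi_le d a}. ennreal K * seminorm ?W (mi_sub a d) (mi_sub b c))"
    proof (intro sum_mono mult_right_mono ennreal_leI)
      fix c d assume "c \<in> {c. mi_le c b}" "d \<in> {d. mi_le d a}"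
      then show "(\<Sum>e\<in>{e. mi_le e c}. \<Sum>f\<in>{f. mi_le f d}. coef c d e f) \<le> K"
        unfolding coef_def K_def by (intro coef_bound) auto
    qed simp
    also have "\<dots> = ennreal K * (\<Sum>d\<in>{d. mi_le d a}. \<Sum>c\<in>{c. mi_le c b}. seminorm ?W (mi_sub a d) (mi_sub b c))"
      by (simp add: sum_distrib_left) (rule sum.swap)
    also have "(\<Sum>d\<in>{d. mi_le d a}. \<Sum>c\<in>{c. mi_le c b}. seminorm ?W (mi_sub a d) (mi_sub b c)) = seminorm_sum ?W a b"
      unfolding seminorm_sum_def
      using sum_reflect[of "\<lambda>a'. \<Sum>c\<in>{c. mi_le c b}. seminorm ?W a' (mi_sub b c)" a]
            sum_reflect[of "\<lambda>b'. seminorm ?W _ b'" b]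
      by simp
    finally show ?thesis .
  qed
  show "seminorm ?WAB a b \<le> RHS1 \<and> seminorm ?WAB a b \<le> ennreal K * seminorm_sum ?W a b"
    using first second by auto
qed

end
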